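(* Let $G$ be a finite subgroup of $\mathrm{SU}(2)$ and $\lambda: G\to \mathrm{U}(K)$ an irreducible representation. Let $\mathcal{C}$ be a $((j,K,d))$ spin code with encoding isometry $V:\mathbb{C}^K\to \mathcal{H}_j$ which is $(G,\lambda)$-covariant, i.e. $D^j(g)V = V\lambda(g)$ for all $g\in G$. Let $n=2j$. Then the image $\mathscr{D}(\mathcal{C})$ of the code under the Dicke state mapping is a permutationally invariant $n$-qubit code of dimension $K$ and distance $d$ (an $((n,K,d))$ code), and it is $G$-transversal: $g^{\otimes n}(\mathscr{D}V) = (\mathscr{D}V)\lambda(g)$ for all $g\in G$.
   Context: For a half-integer or integer $j\ge 0$, $\mathcal{H}_j$ denotes the spin-$j$ irreducible representation of $\mathrm{SU}(2)$, of dimension $2j+1$, with orthonormal $J_z$-eigenbasis $|j,m\rangle$, $m=-j,\dots,j$; $D^j(g)$ is the action of $g\in\mathrm{SU}(2)$ (Wigner $D$-operator). The spherical tensors are $T^k_q=\sqrt{\tfrac{2k+1}{2j+1}}\sum_{m=-j}^{j}C^{j\,m+q}_{k\,q,\,j\,m}|j,m+q\rangle\langle j,m|$ for $0\le k\le 2j$, $-k\le q\le k$ (Clebsch–Gordan coefficients; terms with $|m+q|>j$ vanish). A spin code is a $K$-dimensional subspace of $\mathcal{H}_j$; it is a $((j,K,d))$ spin code (distance $d$) if for all codewords $|\phi\rangle,|\psi\rangle$ and all $0\le k<d$, $-k\le q\le k$: $\langle\phi|T^k_q|\psi\rangle=c_{k,q}\langle\phi|\psi\rangle$ with $c_{k,q}$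 independent of the codewords. The Dicke state mapping $\mathscr{D}$ is the linear isometry $\mathcal{H}_j\to(\mathbb{C}^2)^{\otimes 2j}$ with $|j,m\rangle\mapsto |D^{2j}_{j-m}\rangle$, where $|D^n_w\rangle$ is the normalized uniform superposition of all $n$-qubit computational basis states of Hamming weight $w$. An $n$-qubit code (subspace) has distance $d$, written $((n,K,d))$ when of dimension $K$, if for all codewords $|\phi\rangle,|\psi\rangle$ and every $n$-qubit Pauli operator $E$ of weight $<d$ (weight = number of non-identity tensor factors), $\langle\phi|E|\psi\rangle=c_E\langle\phi|\psi\rangle$ with $c_E$ independent of the codewords. A multiqubit code is permutationally invariant if every codeword is invariant under all permutations of the qubits. *)

theory Defs
  imports Complex_Main "Jordan_Normal_Form.Matrix" "Jordan_Normal_Form.Determinant"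
    "Jordan_Normal_Form.DL_Rank"
begin

definition cadj :: "complex mat \<Rightarrow> complex mat" where
  "cadj A = mat (dim_col A) (dim_row A) (\<lambda>(i,k). cnj (A $$ (k,i)))"

definition cinner :: "complex vec \<Rightarrow> complex vec \<Rightarrow> complex" where
  "cinner \<phi> \<psi> = (\<Sum>i<dim_vec \<psi>. cnj (\<phi> $ i) * \<psi> $ i)"

definition unitary_mat :: "nat \<Rightarrow> complex mat \<Rightarrow> bool" where
  "unitary_mat N U \<longleftrightarrow> U \<in> carrier_mat N N \<and> cadj U * U = 1\<^sub>m N \<and> U * cadj U = 1\<^sub>m N"

definition isometry_mat :: "nat \<Rightarrow> nat \<Rightarrow> complex mat \<Rightarrow> bool" where
  "isometry_mat N K V \<longleftrightarrow> V \<in> carrier_mat N K \<and> cadj V * V = 1\<^sub>m K"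

definition image_mat :: "complex mat \<Rightarrow> complex vec set" where
  "image_mat V = {V *\<^sub>v x | x. x \<in> carrier_vec (dim_col V)}"

definition is_subspace :: "nat \<Rightarrow> complex vec set \<Rightarrow> bool" where
  "is_subspace N W \<longleftrightarrow> W \<subseteq> carrier_vec N \<and> 0\<^sub>v N \<in> W \<and>
     (\<forall>v\<in>W. \<forall>w\<in>W. v + w \<in> W) \<and> (\<forall>c. \<forall>v\<in>W. c \<cdot>\<^sub>v v \<in> W)"

definition SU2 :: "complex mat set" where
  "SU2 = {U. unitary_mat 2 U \<and> det U = 1}"

definition finite_subgroup_SU2 :: "complex mat set \<Rightarrow> bool" where
  "finite_subgroup_SU2 G \<longleftrightarrow> finite G \<and> G \<subseteq> SU2 \<and> 1\<^sub>m 2 \<in> G \<and>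
     (\<forall>g\<in>G. \<forall>h\<in>G. g * h \<in> G) \<and> (\<forall>g\<in>G. \<exists>h\<in>G. g * h = 1\<^sub>m 2)"

definition unitary_rep :: "complex mat set \<Rightarrow> nat \<Rightarrow> (complex mat \<Rightarrow> complex mat) \<Rightarrow> bool" where
  "unitary_rep G K rho \<longleftrightarrow> (\<forall>g\<in>G. unitary_mat K (rho g)) \<and>
     (\<forall>g\<in>G. \<forall>h\<in>G. rho (g * h) = rho g * rho h)"

definition irreducible_rep :: "complex mat set \<Rightarrow> nat \<Rightarrow> (complex mat \<Rightarrow> complex mat) \<Rightarrow> bool" where
  "irreducible_rep G K rho \<longleftrightarrow> unitary_rep G K rho \<and> K > 0 \<and>
     (\<forall>W. is_subspace K W \<and> (\<forall>g\<in>G. \<forall>w\<in>W. rho g *\<^sub>v w \<in> W)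
        \<longrightarrow> W = {0\<^sub>v K} \<or> W = carrier_vec K)"

section \<open>Spin-j representation (n = 2j), basis index a = j - m \<in> {0..n}\<close>

text \<open>D^j(g) is realised as the standard action of g on homogeneous polynomials of degree
  n = 2j in two variables x, y (x \<leftrightarrow> m = +1/2, y \<leftrightarrow> m = -1/2), in the orthonormal basis
  |j,m\<rangle> \<leftrightarrow> x^(j+m) y^(j-m) / sqrt((j+m)! (j-m)!) (standard Condon--Shortley phases).
  Entry (b,a): coefficient of basis vector b (m' = j - b) in D^j(g)|j, j - a\<rangle>.\<close>
definition wignerD :: "nat \<Rightarrow> complex mat \<Rightarrow> complex mat" where
  "wignerD n g = mat (n+1) (n+1) (\<lambda>(b,a).
     complex_of_real (sqrt (fact b * fact (n-b) / (fact a * fact (n-a)))) *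
     (\<Sum>k\<in>{0..n-a}. if k \<le> b \<and> b - k \<le> a then
        of_nat ((n-a) choose k) * g$$(0,0)^(n-a-k) * g$$(1,0)^k *
        of_nat (a choose (b-k)) * g$$(0,1)^(a-(b-k)) * g$$(1,1)^(b-k)
      else 0))"

section \<open>Clebsch--Gordan coefficients (Racah formula), all arguments doubled\<close>

definition hfact :: "int \<Rightarrow> real" where
  "hfact x = fact (nat (x div 2))"

text \<open>cg tj1 tm1 tj2 tm2 tJ tM = C^{J M}_{j1 m1, j2 m2} = \<langle>j1 m1 j2 m2 | J M\<rangle> with tj1 = 2 j1 etc.\<close>
definition cg :: "int \<Rightarrow> int \<Rightarrow> int \<Rightarrow> int \<Rightarrow> int \<Rightarrow> int \<Rightarrow> real" where
  "cg tj1 tm1 tj2 tm2 tJ tM =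
    (if 0 \<le> tj1 \<and> 0 \<le> tj2 \<and> 0 \<le> tJ \<and> \<bar>tm1\<bar> \<le> tj1 \<and> \<bar>tm2\<bar> \<le> tj2 \<and> \<bar>tM\<bar> \<le> tJ \<and>
        even (tj1 - tm1) \<and> even (tj2 - tm2) \<and> even (tJ - tM) \<and>
        \<bar>tj1 - tj2\<bar> \<le> tJ \<and> tJ \<le> tj1 + tj2 \<and> even (tj1 + tj2 + tJ) \<and> tM = tm1 + tm2
     then
       sqrt ((tJ + 1) * hfact (tJ + tj1 - tj2) * hfact (tJ - tj1 + tj2) * hfact (tj1 + tj2 - tJ)
             / hfact (tj1 + tj2 + tJ + 2)) *
       sqrt (hfact (tJ + tM) * hfact (tJ - tM) * hfact (tj1 - tm1) * hfact (tj1 + tm1) *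
             hfact (tj2 - tm2) * hfact (tj2 + tm2)) *
       (\<Sum>k\<in>{0..nat (tj1 + tj2 + tJ)}.
          let tk = 2 * int k in
          if 0 \<le> tj1 + tj2 - tJ - tk \<and> 0 \<le> tj1 - tm1 - tk \<and> 0 \<le> tj2 + tm2 - tk \<and>
             0 \<le> tJ - tj2 + tm1 + tk \<and> 0 \<le> tJ - tj1 - tm2 + tk
          then (-1) ^ k / (fact k * hfact (tj1 + tj2 - tJ - tk) * hfact (tj1 - tm1 - tk) *
                 hfact (tj2 + tm2 - tk) * hfact (tJ - tj2 + tm1 + tk) * hfact (tJ - tj1 - tm2 + tk))
          else 0)
     else 0)"

text \<open>Matrix entry (b,a) = \<langle>j, j-b| T^k_q |j, j-a\<rangle>; nonzero only if j-b = (j-a)+q.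
  Here 2m = n - 2a.\<close>
definition sph_tensor :: "nat \<Rightarrow> nat \<Rightarrow> int \<Rightarrow> complex mat" where
  "sph_tensor n k q = mat (n+1) (n+1) (\<lambda>(b,a).
     if int b = int a - q then
       complex_of_real (sqrt ((2 * real k + 1) / (real n + 1)) *
         cg (2 * int k) (2 * q) (int n) (int n - 2 * int a) (int n) (int n - 2 * int a + 2 * q))
     else 0)"

definition spin_code_distance :: "nat \<Rightarrow> nat \<Rightarrow> complex vec set \<Rightarrow> bool" where
  "spin_code_distance n d C \<longleftrightarrow>
     (\<forall>k. k < d \<and> k \<le> n \<longrightarrow> (\<forall>q. \<bar>q\<bar> \<le> int k \<longrightarrow>
        (\<exists>c. \<forall>\<phi>\<in>C. \<forall>\<psi>\<in>C. cinner \<phi> (sph_tensor n k q *\<^sub>v \<psi>) = c * cinner \<phi> \<psi>)))"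

definition spin_code_with_isometry :: "nat \<Rightarrow> nat \<Rightarrow> nat \<Rightarrow> complex mat \<Rightarrow> bool" where
  "spin_code_with_isometry n K d V \<longleftrightarrow>
     isometry_mat (n+1) K V \<and> spin_code_distance n d (image_mat V)"

text \<open>Computational basis state x \<in> {0..<2^n}; qubit i is bit i of x.\<close>
definition qbit :: "nat \<Rightarrow> nat \<Rightarrow> nat" where
  "qbit x i = (x div 2 ^ i) mod 2"

definition hamming_wt :: "nat \<Rightarrow> nat \<Rightarrow> nat" where
  "hamming_wt n x = card {i. i < n \<and> qbit x i = 1}"

text \<open>Dicke mapping as a 2^n \<times> (n+1) matrix: |j,m\<rangle> = basis a = j - m \<mapsto> |D^n_a\<rangle>.\<close>
definition dicke_map :: "nat \<Rightarrow> complex mat" where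
  "dicke_map n = mat (2^n) (n+1) (\<lambda>(x,a).
     if hamming_wt n x = a then complex_of_real (1 / sqrt (real (n choose a))) else 0)"

text \<open>Tensor product A_0 \<otimes> ... \<otimes> A_{n-1} of single-qubit (2\<times>2) operators.\<close>
definition tensor_ops :: "nat \<Rightarrow> (nat \<Rightarrow> complex mat) \<Rightarrow> complex mat" where
  "tensor_ops n A = mat (2^n) (2^n) (\<lambda>(x,y). \<Prod>i<n. A i $$ (qbit x i, qbit y i))"

definition tensor_pow :: "nat \<Rightarrow> complex mat \<Rightarrow> complex mat" where
  "tensor_pow n g = tensor_ops n (\<lambda>_. g)"

definition pauli1 :: "nat \<Rightarrow> complex mat" where
  "pauli1 p = (if p = 1 then mat_of_rows_list 2 [[0,1],[1,0]]
              else if p = 2 then mat_of_rows_list 2 [[0,-\<i>],[\<i>,0]]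
              else if p = 3 then mat_of_rows_list 2 [[1,0],[0,-1]]
              else 1\<^sub>m 2)"

definition pauli_op :: "nat \<Rightarrow> (nat \<Rightarrow> nat) \<Rightarrow> complex mat" where
  "pauli_op n p = tensor_ops n (\<lambda>i. pauli1 (p i))"

definition pauli_weight :: "nat \<Rightarrow> (nat \<Rightarrow> nat) \<Rightarrow> nat" where
  "pauli_weight n p = card {i. i < n \<and> p i \<noteq> 0}"

definition qubit_code_distance :: "nat \<Rightarrow> nat \<Rightarrow> complex vec set \<Rightarrow> bool" where
  "qubit_code_distance n d Q \<longleftrightarrow>
     (\<forall>p. (\<forall>i<n. p i < 4) \<and> pauli_weight n p < d \<longrightarrow>
        (\<exists>c. \<forall>\<phi>\<in>Q. \<forall>\<psi>\<in>Q. cinner \<phi> (pauli_op n p *\<^sub>v \<psi>) = c * cinner \<phi> \<psi>))"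

definition permute_basis :: "nat \<Rightarrow> (nat \<Rightarrow> nat) \<Rightarrow> nat \<Rightarrow> nat" where
  "permute_basis n \<sigma> x = (\<Sum>i<n. qbit x (\<sigma> i) * 2 ^ i)"

definition perm_vec :: "nat \<Rightarrow> (nat \<Rightarrow> nat) \<Rightarrow> complex vec \<Rightarrow> complex vec" where
  "perm_vec n \<sigma> \<psi> = vec (2^n) (\<lambda>x. \<psi> $ permute_basis n \<sigma> x)"

definition perm_invariant_code :: "nat \<Rightarrow> complex vec set \<Rightarrow> bool" where
  "perm_invariant_code n Q \<longleftrightarrow>
     (\<forall>\<sigma>. \<sigma> permutes {..<n} \<longrightarrow> (\<forall>\<psi>\<in>Q. perm_vec n \<sigma> \<psi> = \<psi>))"

definition code_dim :: "complex mat \<Rightarrow> nat" where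
  "code_dim W = vec_space.rank (dim_row W) W"

end

theory Submission
  imports Defs "HOL-Computational_Algebra.Polynomial"
begin
definition bits :: "nat \<Rightarrow> nat \<Rightarrow> nat set" where
  "bits n x = {i. i < n \<and> qbit x i = 1}"

lemma qbit_01: "qbit x i = 0 \<or> qbit x i = 1"
  unfolding qbit_def by auto

lemma hamming_bits: "hamming_wt n x = card (bits n x)"
  unfolding hamming_wt_def bits_def by simp

lemma bits_sub: "bits n x \<subseteq> {..<n}"
  unfolding bits_def by auto

lemma qbit_Suc: "qbit x (Suc i) = qbit (x div 2) i"
  unfolding qbit_def by (simp add: div_mult2_eq)

lemma qbit_0: "qbit x 0 = x mod 2"
  unfolding qbit_def by simp

lemma binary_expansion: "x < 2^n \<Longrightarrow> (\<Sum>i<n. qbit x i * 2^i) = x"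
proof (induction n arbitrary: x)
  case 0
  then show ?case by simp
next
  case (Suc n)
  have "x div 2 < 2^n" using Suc.prems by auto
  have "(\<Sum>i<Suc n. qbit x i * 2^i) = qbit x 0 + (\<Sum>i<n. qbit x (Suc i) * 2^(Suc i))"
    by (simp only: sum.lessThan_Suc_shift) simp
  also have "\<dots> = x mod 2 + 2 * (\<Sum>i<n. qbit (x div 2) i * 2^i)"
    by (simp add: qbit_Suc qbit_0 sum_distrib_left mult.commute mult.left_commute)
  also have "\<dots> = x" using Suc.IH[OF \<open>x div 2 < 2^n\<close>] by simp
  finally show ?case .
qed

lemma from_bits: "(\<forall>i. c i \<le> (1::nat)) \<Longrightarrow> (\<Sum>i<n. c i * 2^i) < 2^n \<and> (\<forall>j<n. qbit (\<Sum>i<n. c i * 2^i) j = c j)"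
proof (induction n arbitrary: c)
  case 0
  then show ?case by simp
next
  case (Suc n)
  define c' where "c' = (\<lambda>i. c (Suc i))"
  have c': "\<forall>i. c' i \<le> 1" using Suc.prems by (simp add: c'_def)
  note IH = Suc.IH[OF c']
  have eq: "(\<Sum>i<Suc n. c i * 2^i) = c 0 + 2 * (\<Sum>i<n. c' i * 2^i)"
    by (simp only: sum.lessThan_Suc_shift) (simp add: c'_def sum_distrib_left mult.commute mult.left_commute)
  have c0: "c 0 \<le> 1" using Suc.prems by simp
  show ?case
  proof
    show "(\<Sum>i<Suc n. c i * 2^i) < 2^Suc n" unfolding eq using IH c0 by simp
    show "\<forall>j<Suc n. qbit (\<Sum>i<Suc n. c i * 2^i) j = c j"
    proof (intro allI impI)
      fix j assume j: "j < Suc n"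
      show "qbit (\<Sum>i<Suc n. c i * 2^i) j = c j"
      proof (cases j)
        case 0
        have "qbit (c 0 + 2 * (\<Sum>i<n. c' i * 2^i)) 0 = c 0" using c0 by (simp add: qbit_0)
        then show ?thesis unfolding eq 0 .
      next
        case (Suc j')
        have "(c 0 + 2 * (\<Sum>i<n. c' i * 2^i)) div 2 = (\<Sum>i<n. c' i * 2^i)" using c0 by auto
        then show ?thesis unfolding eq Suc qbit_Suc using IH j Suc by (simp add: c'_def)
      qed
    qed
  qed
qed

lemma bits_inj: assumes "x < 2^n" "y < 2^n" "bits n x = bits n y" shows "x = y"
proof -
  have "\<forall>i<n. qbit x i = qbit y i"
  proof (intro allI impI)
    fix i assume "i < n"
    then have "(qbit x i = 1) = (qbit y i = 1)" using assms(3) unfolding bits_def by blast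
    then show "qbit x i = qbit y i" using qbit_01[of x i] qbit_01[of y i] by auto
  qed
  then have "(\<Sum>i<n. qbit x i * 2^i) = (\<Sum>i<n. qbit y i * 2^i)" by simp
  then show ?thesis using binary_expansion assms by metis
qed

lemma bits_bij: "bij_betw (bits n) {..<2^n} (Pow {..<n})"
  unfolding bij_betw_def
proof
  show "inj_on (bits n) {..<2 ^ n}" using bits_inj by (meson inj_onI lessThan_iff)
  show "bits n ` {..<2 ^ n} = Pow {..<n}"
  proof
    show "bits n ` {..<2 ^ n} \<subseteq> Pow {..<n}" using bits_sub by auto
    show "Pow {..<n} \<subseteq> bits n ` {..<2 ^ n}"
    proof
      fix S assume S: "S \<in> Pow {..<n}"
      define c where "c = (\<lambda>i. if i \<in> S then 1 else (0::nat))"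
      have c1: "\<forall>i. c i \<le> 1" by (simp add: c_def)
      note fb = from_bits[OF c1, of n]
      have "bits n (\<Sum>i<n. c i * 2^i) = S"
        using fb S unfolding bits_def c_def by (auto split: if_splits)
      then show "S \<in> bits n ` {..<2 ^ n}" using fb by force
    qed
  qed
qed

lemma sum_bits: "(\<Sum>x<2^n. f (bits n x)) = (\<Sum>X\<in>Pow {..<n}. f X)"
  using sum.reindex_bij_betw[OF bits_bij] by blast

lemma qbit_bits: "i < n \<Longrightarrow> qbit x i = (if i \<in> bits n x then 1 else 0)"
  unfolding bits_def using qbit_01[of x i] by auto

lemma cadj_carrier[simp]: "dim_row (cadj A) = dim_col A" "dim_col (cadj A) = dim_row A"
  unfolding cadj_def by auto

lemma cadj_index[simp]: "i < dim_col A \<Longrightarrow> j < dim_row A \<Longrightarrow> cadj A $$ (i,j) = cnj (A $$ (j,i))"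
  unfolding cadj_def by auto

lemma cadj_carrier_mat: "A \<in> carrier_mat m n \<Longrightarrow> cadj A \<in> carrier_mat n m"
  unfolding cadj_def by auto

lemma mult_entry: "A \<in> carrier_mat m n \<Longrightarrow> B \<in> carrier_mat n p \<Longrightarrow> i < m \<Longrightarrow> j < p \<Longrightarrow>
   (A * B) $$ (i,j) = (\<Sum>k<n. A $$ (i,k) * B $$ (k,j))"
  by (auto simp: scalar_prod_def atLeast0LessThan intro!: sum.cong)

lemma multv_entry: "A \<in> carrier_mat m n \<Longrightarrow> v \<in> carrier_vec n \<Longrightarrow> i < m \<Longrightarrow>
   (A *\<^sub>v v) $ i = (\<Sum>k<n. A $$ (i,k) * v $ k)"
  by (auto simp: scalar_prod_def atLeast0LessThan intro!: sum.cong)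

lemma cadj_mult: assumes "A \<in> carrier_mat m n" "B \<in> carrier_mat n p"
  shows "cadj (A * B) = cadj B * cadj A"
proof (rule eq_matI)
  show "dim_row (cadj (A * B)) = dim_row (cadj B * cadj A)" using assms by simp
  show "dim_col (cadj (A * B)) = dim_col (cadj B * cadj A)" using assms by simp
  fix i j assume ij: "i < dim_row (cadj B * cadj A)" "j < dim_col (cadj B * cadj A)"
  have cB: "cadj B \<in> carrier_mat p n" "cadj A \<in> carrier_mat n m" using assms by auto
  show "cadj (A * B) $$ (i, j) = (cadj B * cadj A) $$ (i, j)"
    using ij assms by (simp add: scalar_prod_def atLeast0LessThan mult.commute)
qed

lemma cinner_adj: assumes "A \<in> carrier_mat m n" "u \<in> carrier_vec m" "v \<in> carrier_vec n"
  shows "cinner u (A *\<^sub>v v) = cinner (cadj A *\<^sub>v u) v"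
proof -
  have cA: "cadj A \<in> carrier_mat n m" using assms by auto
  have "cinner u (A *\<^sub>v v) = (\<Sum>i<m. cnj (u $ i) * (\<Sum>k<n. A $$ (i,k) * v $ k))"
    unfolding cinner_def using assms by (simp add: scalar_prod_def atLeast0LessThan)
  also have "\<dots> = (\<Sum>k<n. (\<Sum>i<m. cnj (u $ i) * A $$ (i,k)) * v $ k)"
    by (simp add: sum_distrib_left sum_distrib_right mult.assoc) (rule sum.swap)
  also have "\<dots> = cinner (cadj A *\<^sub>v u) v"
    unfolding cinner_def using assms cA by (simp add: scalar_prod_def atLeast0LessThan mult.commute)
  finally show ?thesis .
qed

lemma cinner_iso: assumes "A \<in> carrier_mat m n" "cadj A * A = 1\<^sub>m n" "u \<in> carrier_vec n" "v \<in> carrier_vec n"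
  shows "cinner (A *\<^sub>v u) (A *\<^sub>v v) = cinner u v"
proof -
  have "cinner (A *\<^sub>v u) (A *\<^sub>v v) = cinner (cadj A *\<^sub>v (A *\<^sub>v u)) v"
    using cinner_adj assms by auto
  also have "cadj A *\<^sub>v (A *\<^sub>v u) = (cadj A * A) *\<^sub>v u"
    using assms by (metis assoc_mult_mat_vec cadj_carrier carrier_matD carrier_matI)
  finally show ?thesis using assms by simp
qed

lemma dicke_carrier: "dicke_map n \<in> carrier_mat (2^n) (n+1)"
  unfolding dicke_map_def by simp

lemma dicke_dims[simp]: "dim_row (dicke_map n) = 2^n" "dim_col (dicke_map n) = n+1"
  unfolding dicke_map_def by auto

lemma dicke_entry: "x < 2^n \<Longrightarrow> a \<le> n \<Longrightarrow> dicke_map n $$ (x,a) =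
   (if card (bits n x) = a then complex_of_real (1 / sqrt (real (n choose a))) else 0)"
  unfolding dicke_map_def by (simp add: hamming_bits)

lemma card_subsets_n: "card {X \<in> Pow {..<n}. card X = a} = n choose a"
proof -
  have "{X \<in> Pow {..<n}. card X = a} = {B. B \<subseteq> {..<n} \<and> card B = a}" by auto
  then show ?thesis using n_subsets[of "{..<n}" a] by simp
qed

lemma dicke_iso: "cadj (dicke_map n) * dicke_map n = 1\<^sub>m (n+1)"
proof (rule eq_matI)
  let ?D = "dicke_map n"
  have cD: "cadj ?D \<in> carrier_mat (n+1) (2^n)" using dicke_carrier cadj_carrier_mat by blast
  show "dim_row (cadj ?D * ?D) = dim_row (1\<^sub>m (n + 1))" using dicke_carrier by simp
  show "dim_col (cadj ?D * ?D) = dim_col (1\<^sub>m (n + 1))" using dicke_carrier by simp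
  fix a b assume ab: "a < dim_row (1\<^sub>m (n + 1))" "b < dim_col (1\<^sub>m (n + 1))"
  then have a: "a \<le> n" and b: "b \<le> n" by auto
  have "(cadj ?D * ?D) $$ (a,b) = (\<Sum>x<2^n. cnj (?D $$ (x,a)) * ?D $$ (x,b))"
    using mult_entry[OF cD dicke_carrier] a b dicke_carrier by simp
  also have "\<dots> = (\<Sum>x<2^n. (\<lambda>X. if card X = a \<and> card X = b then complex_of_real (1 / sqrt (real (n choose a)))^2 else 0) (bits n x))"
    using a b by (intro sum.cong) (auto simp: dicke_entry power2_eq_square)
  also have "\<dots> = (\<Sum>X\<in>Pow {..<n}. if card X = a \<and> card X = b then complex_of_real (1 / sqrt (real (n choose a)))^2 else 0)"
    by (rule sum_bits)
  also have "\<dots> = (if a = b then of_nat (card {X \<in> Pow {..<n}. card X = a}) * complex_of_real (1 / sqrt (real (n choose a)))^2 else 0)"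
  proof -
    have e: "Pow {..<n} \<inter> {X. card X = a \<and> card X = b} = (if a = b then {X \<in> Pow {..<n}. card X = a} else {})" by auto
    show ?thesis by (simp add: sum.If_cases e)
  qed
  also have "\<dots> = (if a = b then 1 else 0)"
  proof -
    have pos: "real (n choose a) > 0" using a by simp
    have "real (n choose a) * (1 / sqrt (real (n choose a)))^2 = 1"
      using pos by (simp add: power_divide)
    then have "complex_of_real (real (n choose a) * (1 / sqrt (real (n choose a)))^2) = 1" by simp
    moreover have "complex_of_nat (n choose a) * complex_of_real (1 / sqrt (real (n choose a)))^2 = complex_of_real (real (n choose a) * (1 / sqrt (real (n choose a)))^2)"
      by (simp only: of_real_mult of_real_power of_real_of_nat_eq)
    ultimately show ?thesis unfolding card_subsets_n by auto
  qed
  finally show "(cadj ?D * ?D) $$ (a, b) = 1\<^sub>m (n + 1) $$ (a, b)" using ab by simp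
qed

lemma pb_props: assumes "\<sigma> permutes {..<n}" "x < 2^n"
  shows "permute_basis n \<sigma> x < 2^n" "card (bits n (permute_basis n \<sigma> x)) = card (bits n x)"
proof -
  define c where "c = (\<lambda>i. qbit x (\<sigma> i))"
  have c1: "\<forall>i. c i \<le> 1" unfolding c_def using qbit_01 by (metis le_refl zero_le_one)
  have pbdef: "permute_basis n \<sigma> x = (\<Sum>i<n. c i * 2^i)" unfolding permute_basis_def c_def ..
  note fb = from_bits[OF c1, of n, folded pbdef]
  show "permute_basis n \<sigma> x < 2^n" using fb by simp
  have sig: "\<And>i. i < n \<Longrightarrow> \<sigma> i < n" using assms(1) permutes_in_image by fastforce
  have eq: "bits n (permute_basis n \<sigma> x) = {j. j < n \<and> \<sigma> j \<in> bits n x}"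
    using fb sig unfolding bits_def c_def by auto
  have inj: "inj_on \<sigma> {j. j < n \<and> \<sigma> j \<in> bits n x}"
    using permutes_inj[OF assms(1)] by (auto intro: inj_on_subset)
  have img: "\<sigma> ` {j. j < n \<and> \<sigma> j \<in> bits n x} = bits n x"
  proof
    show "\<sigma> ` {j. j < n \<and> \<sigma> j \<in> bits n x} \<subseteq> bits n x" by auto
    show "bits n x \<subseteq> \<sigma> ` {j. j < n \<and> \<sigma> j \<in> bits n x}"
    proof
      fix y assume y: "y \<in> bits n x"
      then have "y < n" using bits_sub by auto
      then obtain j where "j < n" "\<sigma> j = y" using assms(1)
        by (metis lessThan_iff permutes_inverses(1) permutes_in_image permutes_inv)
      then show "y \<in> \<sigma> ` {j. j < n \<and> \<sigma> j \<in> bits n x}" using y by auto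
    qed
  qed
  show "card (bits n (permute_basis n \<sigma> x)) = card (bits n x)"
    unfolding eq using card_image[OF inj] img by simp
qed

lemma perm_inv_part: assumes V: "V \<in> carrier_mat (n+1) K"
  shows "perm_invariant_code n (image_mat (dicke_map n * V))"
  unfolding perm_invariant_code_def
proof (intro allI impI ballI)
  fix \<sigma> \<psi> assume sig: "\<sigma> permutes {..<n}" and psi: "\<psi> \<in> image_mat (dicke_map n * V)"
  let ?W = "dicke_map n * V"
  have W: "?W \<in> carrier_mat (2^n) K" using V dicke_carrier by auto
  obtain z where z: "z \<in> carrier_vec K" "\<psi> = ?W *\<^sub>v z" using psi W unfolding image_mat_def by auto
  have Wrow: "\<And>x. x < 2^n \<Longrightarrow> row ?W (permute_basis n \<sigma> x) = row ?W x"
  proof -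
    fix x :: nat assume x: "x < 2^n"
    note pb = pb_props[OF sig x]
    show "row ?W (permute_basis n \<sigma> x) = row ?W x"
    proof (rule eq_vecI)
      fix a assume "a < dim_vec (row ?W x)"
      then have a: "a < K" using W by auto
      have "row ?W (permute_basis n \<sigma> x) $ a = (\<Sum>b<n+1. dicke_map n $$ (permute_basis n \<sigma> x, b) * V $$ (b,a))"
        using pb a V by (simp add: scalar_prod_def atLeast0LessThan)
      also have "\<dots> = (\<Sum>b<n+1. dicke_map n $$ (x, b) * V $$ (b,a))"
        using pb x by (intro sum.cong refl) (simp add: dicke_entry)
      also have "\<dots> = row ?W x $ a"
        using x a V by (simp add: scalar_prod_def atLeast0LessThan)
      finally show "row ?W (permute_basis n \<sigma> x) $ a = row ?W x $ a" .
    qed (use W pb in auto)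
  qed
  show "perm_vec n \<sigma> \<psi> = \<psi>"
  proof (rule eq_vecI)
    show "dim_vec (perm_vec n \<sigma> \<psi>) = dim_vec \<psi>" using z W unfolding perm_vec_def by simp
    fix x assume "x < dim_vec \<psi>"
    then have x: "x < 2^n" using z W by simp
    note pb = pb_props[OF sig x]
    show "perm_vec n \<sigma> \<psi> $ x = \<psi> $ x"
      unfolding perm_vec_def using x pb Wrow[OF x] z W by simp
  qed
qed

lemma rank_iso: assumes W: "W \<in> carrier_mat m k" and iso: "cadj W * W = 1\<^sub>m k"
  shows "vec_space.rank m W = k"
proof -
  interpret vs: vec_space "TYPE(complex)" m .
  have cW: "cadj W \<in> carrier_mat k m" using W cadj_carrier_mat by blast
  have entry: "\<And>i j. i < k \<Longrightarrow> j < k \<Longrightarrow> (cadj W * W) $$ (i,j) = (\<Sum>l<m. cnj (col W i $ l) * col W j $ l)"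
    using W cW by (simp add: scalar_prod_def atLeast0LessThan)
  have dist: "distinct (cols W)"
    unfolding distinct_conv_nth
  proof (intro allI impI)
    fix i j assume ij: "i < length (cols W)" "j < length (cols W)" "i \<noteq> j"
    then have i: "i < k" and j: "j < k" using W by auto
    show "cols W ! i \<noteq> cols W ! j"
    proof
      assume "cols W ! i = cols W ! j"
      then have "col W i = col W j" using ij by simp
      then have "(cadj W * W) $$ (i,j) = (cadj W * W) $$ (i,i)" using entry i j by simp
      then show False using iso i j ij(3) by simp
    qed
  qed
  have indpt: "vs.lin_indpt (set (cols W))"
  proof (rule ccontr)
    assume "\<not> vs.lin_indpt (set (cols W))"
    then obtain v where v: "v \<in> carrier_vec k" "v \<noteq> 0\<^sub>v k" "W *\<^sub>v v = 0\<^sub>v m"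
      using vs.lin_depE[OF W _ dist] by blast
    have "v = (cadj W * W) *\<^sub>v v" using iso v by simp
    also have "\<dots> = cadj W *\<^sub>v (W *\<^sub>v v)" using W cW v by (simp add: assoc_mult_mat_vec)
    also have "\<dots> = 0\<^sub>v k" using v cW W by (intro eq_vecI) (auto simp: carrier_matD)
    finally show False using v by simp
  qed
  show ?thesis using vs.lin_indpt_full_rank[OF W dist indpt] .
qed

lemma code_dim_part: assumes V: "V \<in> carrier_mat (n+1) K" "cadj V * V = 1\<^sub>m K"
  shows "code_dim (dicke_map n * V) = K"
proof -
  let ?D = "dicke_map n"
  have W: "?D * V \<in> carrier_mat (2^n) K" using V dicke_carrier by auto
  have cD: "cadj ?D \<in> carrier_mat (n+1) (2^n)" using dicke_carrier cadj_carrier_mat by blast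
  have cV: "cadj V \<in> carrier_mat K (n+1)" using V cadj_carrier_mat by blast
  have "cadj (?D * V) * (?D * V) = (cadj V * cadj ?D) * (?D * V)"
    using cadj_mult[OF dicke_carrier V(1)] by simp
  also have "\<dots> = cadj V * ((cadj ?D * ?D) * V)"
    using assoc_mult_mat[OF cV cD W] assoc_mult_mat[OF cD dicke_carrier V(1)] by simp
  also have "\<dots> = 1\<^sub>m K" using dicke_iso V by simp
  finally have "cadj (?D * V) * (?D * V) = 1\<^sub>m K" .
  then show ?thesis unfolding code_dim_def using rank_iso[OF W] W by simp
qed

definition chi :: "nat set \<Rightarrow> nat \<Rightarrow> nat" where
  "chi Z i = (if i \<in> Z then 1 else 0)"

lemma sum_Pow_split:
  assumes "finite T" "S \<subseteq> T"
  shows "(\<Sum>X\<in>Pow T. f X) = (\<Sum>A\<in>Pow S. \<Sum>B\<in>Pow (T - S). f (A \<union> B))"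
proof -
  have "(\<Sum>A\<in>Pow S. \<Sum>B\<in>Pow (T - S). f (A \<union> B)) = (\<Sum>(A,B)\<in>Pow S \<times> Pow (T - S). f (A \<union> B))"
    by (rule sum.cartesian_product)
  also have "\<dots> = (\<Sum>X\<in>Pow T. f X)"
    by (rule sum.reindex_bij_witness[where i = "\<lambda>X. (X \<inter> S, X - S)" and j = "\<lambda>(A,B). A \<union> B"])
       (use assms in auto)
  finally show ?thesis by simp
qed

lemma sum_Pow_card:
  assumes "finite X"
  shows "(\<Sum>A\<in>Pow X. h (card A)) = (\<Sum>i\<le>card X. of_nat (card X choose i) * (h i :: 'a::comm_ring_1))"
proof -
  have fin: "finite (Pow X)" using assms by simp
  have img: "card ` Pow X \<subseteq> {..card X}" using assms by (auto intro: card_mono)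
  have "(\<Sum>A\<in>Pow X. h (card A)) = (\<Sum>i\<le>card X. \<Sum>A\<in>{A \<in> Pow X. card A = i}. h (card A))"
    using sum.group[OF fin _ img, of "\<lambda>A. h (card A)"] by simp
  also have "\<dots> = (\<Sum>i\<le>card X. of_nat (card X choose i) * h i)"
  proof (intro sum.cong refl)
    fix i
    have "{A \<in> Pow X. card A = i} = {B. B \<subseteq> X \<and> card B = i}" by auto
    then have c: "card {A \<in> Pow X. card A = i} = card X choose i" using n_subsets[OF assms] by simp
    have "(\<Sum>A\<in>{A \<in> Pow X. card A = i}. h (card A)) = (\<Sum>A\<in>{A \<in> Pow X. card A = i}. h i)" by simp
    also have "\<dots> = of_nat (card X choose i) * h i" using c by simp
    finally show "(\<Sum>A\<in>{A \<in> Pow X. card A = i}. h (card A)) = of_nat (card X choose i) * h i" .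
  qed
  finally show ?thesis .
qed

lemma prod_chi:
  assumes "finite Z" "A \<subseteq> Z"
  shows "(\<Prod>i\<in>Z. f (chi A i)) = f 1 ^ card A * f 0 ^ (card Z - card A)"
proof -
  have "(\<Prod>i\<in>Z. f (chi A i)) = (\<Prod>i\<in>A. f (chi A i)) * (\<Prod>i\<in>Z - A. f (chi A i))"
    using prod.subset_diff[OF assms(2) assms(1)] by (simp add: mult.commute)
  also have "\<dots> = (\<Prod>i\<in>A. f 1) * (\<Prod>i\<in>Z - A. f 0)"
    by (intro arg_cong2[where f = "(*)"] prod.cong) (auto simp: chi_def)
  also have "\<dots> = f 1 ^ card A * f 0 ^ (card Z - card A)"
    using assms by (simp add: card_Diff_subset finite_subset)
  finally show ?thesis .
qed

lemma coef_id:
  assumes "i \<le> a" "i \<le> b" "a - i \<le> n - b" "a \<le> n" "b \<le> n"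
  shows "real (b choose i) * real ((n-b) choose (a-i)) * (1 / sqrt (real (n choose a))) =
    (1 / sqrt (real (n choose b))) * sqrt (fact b * fact (n-b) / (fact a * fact (n-a))) *
    (real ((n-a) choose (b-i)) * real (a choose i))"
proof -
  define P :: real where "P = fact a * fact (n-a)"
  define Q :: real where "Q = fact b * fact (n-b)"
  define N :: real where "N = fact n"
  have P0: "P > 0" and Q0: "Q > 0" and N0: "N > 0" unfolding P_def Q_def N_def by auto
  have ca: "real (n choose a) = N / P" unfolding N_def P_def using assms by (simp add: binomial_fact)
  have cb: "real (n choose b) = N / Q" unfolding N_def Q_def using assms by (simp add: binomial_fact)
  have e1: "n - b - (a - i) = n - a - (b - i)" using assms by simp
  have key: "real (b choose i) * real ((n-b) choose (a-i)) * P = Q * (real ((n-a) choose (b-i)) * real (a choose i))"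
    unfolding P_def Q_def using assms
    by (simp add: binomial_fact e1 field_simps)
  have sP: "sqrt P * sqrt P = P" using P0 by simp
  have "real (b choose i) * real ((n-b) choose (a-i)) * (1 / sqrt (real (n choose a)))
      = real (b choose i) * real ((n-b) choose (a-i)) * sqrt P / sqrt N"
    unfolding ca using P0 N0 by (simp add: real_sqrt_divide)
  also have "\<dots> = real (b choose i) * real ((n-b) choose (a-i)) * P / (sqrt P * sqrt N)"
    using P0 N0 sP by (simp add: field_simps)
  also have "\<dots> = Q * (real ((n-a) choose (b-i)) * real (a choose i)) / (sqrt P * sqrt N)"
    using key by simp
  also have "\<dots> = (1 / sqrt (N / Q)) * sqrt (Q / P) * (real ((n-a) choose (b-i)) * real (a choose i))"
    using P0 N0 Q0 by (simp add: real_sqrt_divide field_simps)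
  finally show ?thesis unfolding cb P_def Q_def by simp
qed

lemma tensor_ops_carrier: "tensor_ops n A \<in> carrier_mat (2^n) (2^n)"
  unfolding tensor_ops_def by simp

lemma tensor_ops_entry: "x < 2^n \<Longrightarrow> y < 2^n \<Longrightarrow>
  tensor_ops n A $$ (x,y) = (\<Prod>i<n. A i $$ (chi (bits n x) i, chi (bits n y) i))"
  unfolding tensor_ops_def chi_def using qbit_bits by (auto intro!: prod.cong)

lemma wigner_carrier: "wignerD n g \<in> carrier_mat (n+1) (n+1)"
  unfolding wignerD_def by simp

lemma reindex_k:
  fixes F :: "nat \<Rightarrow> 'a::comm_monoid_add"
  assumes "a \<le> n" "b \<le> n"
  shows "(\<Sum>k\<in>{0..n-a}. if k \<le> b \<and> b - k \<le> a then F k else 0) =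
         (\<Sum>p\<le>b. if p \<le> a \<and> a - p \<le> n - b then F (b - p) else 0)"
proof -
  have "(\<Sum>k\<in>{0..n-a}. if k \<le> b \<and> b - k \<le> a then F k else 0) = sum F {k\<in>{0..n-a}. k \<le> b \<and> b - k \<le> a}"
    by (rule sum.inter_filter[symmetric]) simp
  also have "\<dots> = sum (\<lambda>p. F (b - p)) {p\<in>{..b}. p \<le> a \<and> a - p \<le> n - b}"
    by (rule sum.reindex_bij_witness[where i = "\<lambda>k. b - k" and j = "\<lambda>p. b - p"]) (use assms in auto)
  also have "\<dots> = (\<Sum>p\<le>b. if p \<le> a \<and> a - p \<le> n - b then F (b - p) else 0)"
    by (rule sum.inter_filter) simp
  finally show ?thesis .
qed

lemma transversal: "tensor_pow n g * dicke_map n = dicke_map n * wignerD n g"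
proof (rule eq_matI)
  let ?T = "tensor_pow n g" and ?D = "dicke_map n" and ?W = "wignerD n g"
  have cT: "?T \<in> carrier_mat (2^n) (2^n)" unfolding tensor_pow_def by (rule tensor_ops_carrier)
  show "dim_row (?T * ?D) = dim_row (?D * ?W)" using cT by simp
  show "dim_col (?T * ?D) = dim_col (?D * ?W)" using wigner_carrier[of n g] by simp
  fix x a assume "x < dim_row (?D * ?W)" "a < dim_col (?D * ?W)"
  then have x: "x < 2^n" and a: "a \<le> n" using wigner_carrier[of n g] by auto
  define X where "X = bits n x"
  define b where "b = card X"
  have Xs: "X \<subseteq> {..<n}" unfolding X_def by (rule bits_sub)
  have b: "b \<le> n" unfolding b_def using card_mono[OF _ Xs] by simp
  have cnX: "card ({..<n} - X) = n - b" unfolding b_def using Xs by (simp add: card_Diff_subset finite_subset)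
  define ca where "ca = complex_of_real (1 / sqrt (real (n choose a)))"
  define H where "H = (\<lambda>p r. g$$(1,1)^p * g$$(1,0)^(b-p) * (g$$(0,1)^r * g$$(0,0)^(n-b-r)) * (if p + r = a then ca else 0))"
  have "(?T * ?D) $$ (x,a) = (\<Sum>y<2^n. ?T $$ (x,y) * ?D $$ (y,a))"
    using mult_entry[OF cT dicke_carrier x] a by simp
  also have "\<dots> = (\<Sum>y<2^n. (\<lambda>Y. (\<Prod>i<n. g $$ (chi X i, chi Y i)) * (if card Y = a then ca else 0)) (bits n y))"
    using x a by (intro sum.cong refl) (simp add: tensor_pow_def tensor_ops_entry dicke_entry X_def ca_def)
  also have "\<dots> = (\<Sum>Y\<in>Pow {..<n}. (\<Prod>i<n. g $$ (chi X i, chi Y i)) * (if card Y = a then ca else 0))"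
    by (rule sum_bits)
  also have "\<dots> = (\<Sum>A\<in>Pow X. \<Sum>B\<in>Pow ({..<n} - X). (\<Prod>i<n. g $$ (chi X i, chi (A \<union> B) i)) * (if card (A \<union> B) = a then ca else 0))"
    by (rule sum_Pow_split[OF _ Xs]) simp
  also have "\<dots> = (\<Sum>A\<in>Pow X. \<Sum>B\<in>Pow ({..<n} - X). H (card A) (card B))"
  proof (intro sum.cong refl)
    fix A B assume A: "A \<in> Pow X" and B: "B \<in> Pow ({..<n} - X)"
    have fA: "finite A" "finite B" using A B Xs by (auto intro: finite_subset)
    have dj: "A \<inter> B = {}" using A B by auto
    have "(\<Prod>i<n. g $$ (chi X i, chi (A \<union> B) i)) = (\<Prod>i\<in>X. g $$ (chi X i, chi (A \<union> B) i)) * (\<Prod>i\<in>{..<n} - X. g $$ (chi X i, chi (A \<union> B) i))"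
      using prod.subset_diff[OF Xs] by (simp add: mult.commute)
    also have "\<dots> = (\<Prod>i\<in>X. (\<lambda>u. g $$ (1, u)) (chi A i)) * (\<Prod>i\<in>{..<n} - X. (\<lambda>u. g $$ (0, u)) (chi B i))"
      using A B by (intro arg_cong2[where f = "(*)"] prod.cong refl) (auto simp: chi_def)
    also have "\<dots> = (g$$(1,1)^card A * g$$(1,0)^(b - card A)) * (g$$(0,1)^card B * g$$(0,0)^(n - b - card B))"
      using prod_chi[of X A "\<lambda>u. g $$ (1, u)"] prod_chi[of "{..<n} - X" B "\<lambda>u. g $$ (0, u)"] A B Xs cnX
      unfolding b_def by (auto intro: finite_subset)
    finally show "(\<Prod>i<n. g $$ (chi X i, chi (A \<union> B) i)) * (if card (A \<union> B) = a then ca else 0) = H (card A) (card B)"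
      unfolding H_def using card_Un_disjoint[OF fA dj] by simp
  qed
  also have "\<dots> = (\<Sum>A\<in>Pow X. \<Sum>r\<le>n-b. of_nat ((n-b) choose r) * H (card A) r)"
  proof (intro sum.cong refl)
    fix A
    show "(\<Sum>B\<in>Pow ({..<n} - X). H (card A) (card B)) = (\<Sum>r\<le>n-b. of_nat ((n-b) choose r) * H (card A) r)"
      using sum_Pow_card[of "{..<n} - X" "H (card A)"] cnX by simp
  qed
  also have "\<dots> = (\<Sum>p\<le>b. of_nat (b choose p) * (\<Sum>r\<le>n-b. of_nat ((n-b) choose r) * H p r))"
    using sum_Pow_card[of X "\<lambda>p. \<Sum>r\<le>n-b. of_nat ((n-b) choose r) * H p r"] Xs unfolding b_def
    by (simp add: finite_subset)
  also have "\<dots> = (\<Sum>p\<le>b. if p \<le> a \<and> a - p \<le> n - b then of_nat (b choose p) * (of_nat ((n-b) choose (a-p)) * H p (a-p)) else 0)"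
  proof (intro sum.cong refl)
    fix p assume "p \<in> {..b}"
    have "(\<Sum>r\<le>n-b. of_nat ((n-b) choose r) * H p r) = (\<Sum>r\<le>n-b. if r = a - p \<and> p \<le> a then of_nat ((n-b) choose r) * H p r else 0)"
      unfolding H_def by (intro sum.cong refl) auto
    also have "\<dots> = (if p \<le> a \<and> a - p \<le> n - b then of_nat ((n-b) choose (a-p)) * H p (a-p) else 0)"
      by (auto simp: sum.delta' conj_commute)
    finally show "of_nat (b choose p) * (\<Sum>r\<le>n-b. of_nat ((n-b) choose r) * H p r) = (if p \<le> a \<and> a - p \<le> n - b then of_nat (b choose p) * (of_nat ((n-b) choose (a-p)) * H p (a-p)) else 0)"
      by simp
  qed
  finally have L: "(?T * ?D) $$ (x,a) = (\<Sum>p\<le>b. if p \<le> a \<and> a - p \<le> n - b then of_nat (b choose p) * (of_nat ((n-b) choose (a-p)) * H p (a-p)) else 0)" .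
  define cb where "cb = complex_of_real (1 / sqrt (real (n choose b)))"
  define sr where "sr = sqrt (fact b * fact (n-b) / (fact a * fact (n-a)) :: real)"
  define F where "F = (\<lambda>k. of_nat ((n-a) choose k) * g$$(0,0)^(n-a-k) * g$$(1,0)^k *
        of_nat (a choose (b-k)) * g$$(0,1)^(a-(b-k)) * g$$(1,1)^(b-k))"
  have Wba: "?W $$ (b,a) = complex_of_real sr * (\<Sum>k\<in>{0..n-a}. if k \<le> b \<and> b - k \<le> a then F k else 0)"
    unfolding wignerD_def sr_def F_def using a b by simp
  have "(?D * ?W) $$ (x,a) = (\<Sum>b'<n+1. ?D $$ (x,b') * ?W $$ (b',a))"
    using mult_entry[OF dicke_carrier wigner_carrier x] a by simp
  also have "\<dots> = (\<Sum>b'<n+1. if b' = b then cb * ?W $$ (b,a) else 0)"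
    using x by (intro sum.cong refl) (auto simp: dicke_entry X_def b_def cb_def)
  also have "\<dots> = cb * ?W $$ (b,a)" using b by simp
  also have "\<dots> = cb * complex_of_real sr * (\<Sum>p\<le>b. if p \<le> a \<and> a - p \<le> n - b then F (b - p) else 0)"
    unfolding Wba reindex_k[OF a b] by simp
  also have "\<dots> = (\<Sum>p\<le>b. if p \<le> a \<and> a - p \<le> n - b then cb * complex_of_real sr * F (b - p) else 0)"
    by (simp add: sum_distrib_left if_distrib cong: if_cong)
  finally have R: "(?D * ?W) $$ (x,a) = (\<Sum>p\<le>b. if p \<le> a \<and> a - p \<le> n - b then cb * complex_of_real sr * F (b - p) else 0)" .
  show "(?T * ?D) $$ (x,a) = (?D * ?W) $$ (x,a)"
    unfolding L R
  proof (intro sum.cong refl)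
    fix p assume p: "p \<in> {..b}"
    show "(if p \<le> a \<and> a - p \<le> n - b then of_nat (b choose p) * (of_nat ((n-b) choose (a-p)) * H p (a-p)) else 0) =
          (if p \<le> a \<and> a - p \<le> n - b then cb * complex_of_real sr * F (b - p) else 0)"
    proof (cases "p \<le> a \<and> a - p \<le> n - b")
      case True
      then have pa: "p \<le> a" "a - p \<le> n - b" by auto
      have pb: "p \<le> b" using p by simp
      have e1: "b - (b - p) = p" using pb by simp
      have e2: "n - a - (b - p) = n - b - (a - p)" using pa pb a b by simp
      have e3: "a - (b - (b - p)) = a - p" using e1 by simp
      have cid: "complex_of_real (real (b choose p) * real ((n-b) choose (a-p)) * (1 / sqrt (real (n choose a)))) =
        complex_of_real ((1 / sqrt (real (n choose b))) * sr * (real ((n-a) choose (b-p)) * real (a choose p)))"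
        using coef_id[OF pa(1) pb pa(2) a b] unfolding sr_def by simp
      have cid2: "of_nat (b choose p) * of_nat ((n-b) choose (a-p)) * ca = cb * complex_of_real sr * (of_nat ((n-a) choose (b-p)) * of_nat (a choose p))"
        using cid unfolding ca_def cb_def by simp
      have "of_nat (b choose p) * (of_nat ((n-b) choose (a-p)) * H p (a-p)) =
            (of_nat (b choose p) * of_nat ((n-b) choose (a-p)) * ca) * (g$$(1,1)^p * g$$(1,0)^(b-p) * (g$$(0,1)^(a-p) * g$$(0,0)^(n-b-(a-p))))"
        unfolding H_def using pa by simp
      also have "\<dots> = cb * complex_of_real sr * F (b - p)"
        unfolding cid2 F_def e1 e2 e3 by (simp add: mult_ac)
      finally show ?thesis using True by simp
    next
      case False
      then show ?thesis by (simp only: if_not_P[OF False] if_False)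
    qed
  qed
qed

definition ff :: "real \<Rightarrow> nat \<Rightarrow> real" where
  "ff x e = (\<Prod>i<e. x - real i)"

lemma ff_Suc: "ff x (Suc e) = ff x e * (x - real e)"
  unfolding ff_def by simp

lemma ff_nat: "ff (real u) e = (if e \<le> u then fact u / fact (u - e) else 0)"
proof (induction e)
  case 0
  then show ?case by (simp add: ff_def)
next
  case (Suc e)
  show ?case
  proof (cases "Suc e \<le> u")
    case True
    then have "u - e = Suc (u - Suc e)" by simp
    then have f: "fact (u - e) = real (u - e) * fact (u - Suc e)" by simp
    have "real u - real e = real (u - e)" using True by simp
    then show ?thesis using Suc True f by (simp add: ff_Suc field_simps)
  next
    case False
    show ?thesis
    proof (cases "e = u")
      case True
      then show ?thesis by (simp add: ff_Suc)
    next
      case False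
      then show ?thesis using Suc \<open>\<not> Suc e \<le> u\<close> by (simp add: ff_Suc)
    qed
  qed
qed

lemma ff_nat_div: "ff (real u) e / fact u = (if e \<le> u then 1 / fact (u - e) else 0)"
  by (simp add: ff_nat)

definition ffp :: "nat \<Rightarrow> real poly" where
  "ffp e = (\<Prod>i<e. [:- real i, 1:])"

definition ffq :: "nat \<Rightarrow> nat \<Rightarrow> real poly" where
  "ffq N e = (\<Prod>i<e. [:real N - real i, -1:])"

lemma poly_ffp: "poly (ffp e) x = ff x e"
  unfolding ffp_def ff_def poly_prod by simp

lemma poly_ffq: "poly (ffq N e) x = ff (real N - x) e"
  unfolding ffq_def ff_def poly_prod by (simp add: algebra_simps)

lemma degree_ffp: "degree (ffp e) = e"
  unfolding ffp_def by (subst degree_prod_eq_sum_degree) auto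

lemma lead_ffp: "coeff (ffp e) e = 1"
  using lead_coeff_prod[of "\<lambda>i. [:- real i, 1:]" "{..<e}"] degree_ffp[of e] unfolding ffp_def by simp

lemma degree_ffq: "degree (ffq N e) = e"
  unfolding ffq_def by (subst degree_prod_eq_sum_degree) auto

lemma lead_ffq: "coeff (ffq N e) e = (-1)^e"
  using lead_coeff_prod[of "\<lambda>i. [:real N - real i, -1:]" "{..<e}"] degree_ffq[of N e] unfolding ffq_def by simp

lemma span_poly:
  fixes P :: "nat \<Rightarrow> real poly"
  assumes "\<forall>i\<le>D. degree (P i) \<le> i \<and> coeff (P i) i \<noteq> 0" "degree f \<le> D"
  shows "\<exists>\<beta>. f = (\<Sum>i\<le>D. Polynomial.smult (\<beta> i) (P i))"
  using assms
proof (induction D arbitrary: f)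
  case 0
  then have d0: "degree (P 0) = 0" "degree f = 0" and nz0: "coeff (P 0) 0 \<noteq> 0" by auto
  define c where "c = coeff f 0 / coeff (P 0) 0"
  have "f = Polynomial.smult c (P 0)"
  proof (rule poly_eqI)
    fix j show "coeff f j = coeff (Polynomial.smult c (P 0)) j"
    proof (cases j)
      case 0
      then show ?thesis using nz0 unfolding c_def by simp
    next
      case (Suc j')
      then show ?thesis using d0 by (simp add: coeff_eq_0)
    qed
  qed
  then show ?case by (intro exI[of _ "\<lambda>_. c"]) simp
next
  case (Suc D)
  define c where "c = coeff f (Suc D) / coeff (P (Suc D)) (Suc D)"
  define f' where "f' = f - Polynomial.smult c (P (Suc D))"
  have nz: "coeff (P (Suc D)) (Suc D) \<noteq> 0" using Suc.prems by auto
  have dP: "degree (P (Suc D)) \<le> Suc D" using Suc.prems by auto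
  have "degree f' \<le> Suc D" unfolding f'_def using Suc.prems dP
    by (meson degree_diff_le degree_smult_le order_trans)
  moreover have "coeff f' (Suc D) = 0" unfolding f'_def c_def using nz by simp
  ultimately have "degree f' \<le> D"
  proof -
    assume a1: "degree f' \<le> Suc D" and a2: "coeff f' (Suc D) = 0"
    show "degree f' \<le> D"
    proof (rule ccontr)
      assume "\<not> degree f' \<le> D"
      then have "degree f' = Suc D" using a1 by simp
      then have "f' = 0" using a2 by (metis leading_coeff_0_iff)
      then show False using \<open>degree f' = Suc D\<close> by simp
    qed
  qed
  then obtain \<beta> where b: "f' = (\<Sum>i\<le>D. Polynomial.smult (\<beta> i) (P i))" using Suc.IH[of f'] Suc.prems by auto
  have "f = (\<Sum>i\<le>D. Polynomial.smult (\<beta> i) (P i)) + Polynomial.smult c (P (Suc D))" using b unfolding f'_def by simp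
  also have "\<dots> = (\<Sum>i\<le>Suc D. Polynomial.smult ((\<beta>(Suc D := c)) i) (P i))"
    by simp
  finally show ?case by blast
qed

lemma hfact2: "z = 2 * int x \<Longrightarrow> hfact z = fact x"
  unfolding hfact_def by simp

definition P1 :: "nat \<Rightarrow> nat \<Rightarrow> real" where
  "P1 n l = real (n + 1) * fact l * fact (n - l) * fact l / fact (l + n + 1)"

definition cc :: "nat \<Rightarrow> nat \<Rightarrow> nat \<Rightarrow> nat \<Rightarrow> real" where
  "cc l p m \<kappa> = (-1)^\<kappa> / (fact \<kappa> * fact (l - \<kappa>) * fact (l + m - p - \<kappa>) * fact (p + \<kappa> - m))"

lemma P1_pos: "l \<le> n \<Longrightarrow> P1 n l > 0"
  unfolding P1_def by simp

lemma cg_alt: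
  fixes tj1 tm1 tj2 tm2 tJ tM :: int
  assumes pm: "p = 0 \<or> m = 0" "p + m \<le> l" "l \<le> n" "u + p + m \<le> n"
    and t: "tj1 = 2 * int l" "tm1 = 2 * (int p - int m)" "tj2 = int n" "tm2 = int n - 2 * int (u + p)"
      "tJ = int n" "tM = int n - 2 * int (u + p) + 2 * (int p - int m)"
  shows "cg tj1 tm1 tj2 tm2 tJ tM =
    sqrt (P1 n l) * sqrt (fact (n - (u + m)) * fact (u + m) * fact (l + m - p) * fact (l + p - m) * fact (u + p) * fact (n - (u + p))) *
    (\<Sum>\<kappa>\<in>{m..l-p}. cc l p m \<kappa> * (ff (real u) (l - \<kappa> - p) * ff (real (n - u - p - m)) (\<kappa> - m)) / (fact u * fact (n - u - p - m)))"
proof -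
  have cond: "0 \<le> tj1 \<and> 0 \<le> tj2 \<and> 0 \<le> tJ \<and> \<bar>tm1\<bar> \<le> tj1 \<and> \<bar>tm2\<bar> \<le> tj2 \<and> \<bar>tM\<bar> \<le> tJ \<and>
        even (tj1 - tm1) \<and> even (tj2 - tm2) \<and> even (tJ - tM) \<and>
        \<bar>tj1 - tj2\<bar> \<le> tJ \<and> tJ \<le> tj1 + tj2 \<and> even (tj1 + tj2 + tJ) \<and> tM = tm1 + tm2"
  proof -
    have e1: "tj1 - tm1 = 2 * (int l - int p + int m)" using t by simp
    have e2: "tj2 - tm2 = 2 * int (u + p)" using t by simp
    have e3: "tJ - tM = 2 * (int (u + p) - int p + int m)" using t by simp
    have e4: "tj1 + tj2 + tJ = 2 * (int l + int n)" using t by simp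
    show ?thesis unfolding e1 e2 e3 e4 using t pm by auto
  qed
  have A: "sqrt ((real_of_int tJ + 1) * hfact (tJ + tj1 - tj2) * hfact (tJ - tj1 + tj2) * hfact (tj1 + tj2 - tJ)
             / hfact (tj1 + tj2 + tJ + 2)) = sqrt (P1 n l)"
  proof -
    have "hfact (tJ + tj1 - tj2) = fact l" by (rule hfact2) (use t in simp)
    moreover have "hfact (tJ - tj1 + tj2) = fact (n - l)" by (rule hfact2) (use t pm in simp)
    moreover have "hfact (tj1 + tj2 - tJ) = fact l" by (rule hfact2) (use t in simp)
    moreover have "hfact (tj1 + tj2 + tJ + 2) = fact (l + n + 1)" by (rule hfact2) (use t in simp)
    moreover have "real_of_int tJ + 1 = real (n + 1)" using t by simp
    ultimately show ?thesis unfolding P1_def by simp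
  qed
  have B: "sqrt (hfact (tJ + tM) * hfact (tJ - tM) * hfact (tj1 - tm1) * hfact (tj1 + tm1) *
             hfact (tj2 - tm2) * hfact (tj2 + tm2)) =
    sqrt (fact (n - (u + m)) * fact (u + m) * fact (l + m - p) * fact (l + p - m) * fact (u + p) * fact (n - (u + p)))"
  proof -
    have "hfact (tJ + tM) = fact (n - (u + m))" by (rule hfact2) (use t pm in auto)
    moreover have "hfact (tJ - tM) = fact (u + m)" by (rule hfact2) (use t pm in auto)
    moreover have "hfact (tj1 - tm1) = fact (l + m - p)" by (rule hfact2) (use t pm in auto)
    moreover have "hfact (tj1 + tm1) = fact (l + p - m)" by (rule hfact2) (use t pm in auto)
    moreover have "hfact (tj2 - tm2) = fact (u + p)" by (rule hfact2) (use t pm in auto)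
    moreover have "hfact (tj2 + tm2) = fact (n - (u + p))" by (rule hfact2) (use t pm in auto)
    ultimately show ?thesis by simp
  qed
  define v where "v = n - u - p - m"
  define Y where "Y = (\<lambda>\<kappa>. cc l p m \<kappa> * (ff (real u) (l - \<kappa> - p) * ff (real v) (\<kappa> - m)) / (fact u * fact v))"
  have trm: "(let tk = 2 * int \<kappa> in
          if 0 \<le> tj1 + tj2 - tJ - tk \<and> 0 \<le> tj1 - tm1 - tk \<and> 0 \<le> tj2 + tm2 - tk \<and>
             0 \<le> tJ - tj2 + tm1 + tk \<and> 0 \<le> tJ - tj1 - tm2 + tk
          then (-1) ^ \<kappa> / (fact \<kappa> * hfact (tj1 + tj2 - tJ - tk) * hfact (tj1 - tm1 - tk) *
                 hfact (tj2 + tm2 - tk) * hfact (tJ - tj2 + tm1 + tk) * hfact (tJ - tj1 - tm2 + tk))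
          else 0) = (if \<kappa> \<in> {m..l-p} then Y \<kappa> else 0)" for \<kappa>
  proof (cases "\<kappa> \<in> {m..l-p}")
    case False
    then have "\<not> (0 \<le> tj1 + tj2 - tJ - 2 * int \<kappa> \<and> 0 \<le> tj1 - tm1 - 2 * int \<kappa> \<and> 0 \<le> tJ - tj2 + tm1 + 2 * int \<kappa>)"
      using t pm by auto
    then show ?thesis using False by (auto simp: Let_def)
  next
    case True
    then have k1: "m \<le> \<kappa>" "\<kappa> + p \<le> l" using pm by auto
    show ?thesis
    proof (cases "l - \<kappa> - p \<le> u \<and> \<kappa> - m \<le> v")
      case False
      then have "\<not> (0 \<le> tj2 + tm2 - 2 * int \<kappa> \<and> 0 \<le> tJ - tj1 - tm2 + 2 * int \<kappa>)"
        using t pm k1 unfolding v_def by auto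
      moreover have "Y \<kappa> = 0" unfolding Y_def using False by (auto simp: ff_nat)
      ultimately show ?thesis using True by (auto simp: Let_def)
    next
      case dep: True
      have C: "0 \<le> tj1 + tj2 - tJ - 2 * int \<kappa> \<and> 0 \<le> tj1 - tm1 - 2 * int \<kappa> \<and> 0 \<le> tj2 + tm2 - 2 * int \<kappa> \<and>
             0 \<le> tJ - tj2 + tm1 + 2 * int \<kappa> \<and> 0 \<le> tJ - tj1 - tm2 + 2 * int \<kappa>"
        using t pm k1 dep unfolding v_def by auto
      have h1: "hfact (tj1 + tj2 - tJ - 2 * int \<kappa>) = fact (l - \<kappa>)" by (rule hfact2) (use t k1 in auto)
      have h2: "hfact (tj1 - tm1 - 2 * int \<kappa>) = fact (l + m - p - \<kappa>)" by (rule hfact2) (use t k1 pm in auto)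
      have h3: "hfact (tj2 + tm2 - 2 * int \<kappa>) = fact (v - (\<kappa> - m))" by (rule hfact2) (use t k1 pm dep in \<open>auto simp: v_def\<close>)
      have h4: "hfact (tJ - tj2 + tm1 + 2 * int \<kappa>) = fact (p + \<kappa> - m)" by (rule hfact2) (use t k1 pm in auto)
      have h5: "hfact (tJ - tj1 - tm2 + 2 * int \<kappa>) = fact (u - (l - \<kappa> - p))" by (rule hfact2) (use t k1 pm dep in auto)
      have "Y \<kappa> = cc l p m \<kappa> * ((fact u / fact (u - (l - \<kappa> - p))) * (fact v / fact (v - (\<kappa> - m)))) / (fact u * fact v)"
        unfolding Y_def using dep by (simp add: ff_nat)
      also have "\<dots> = (-1) ^ \<kappa> / (fact \<kappa> * fact (l - \<kappa>) * fact (l + m - p - \<kappa>) * fact (v - (\<kappa> - m)) * fact (p + \<kappa> - m) * fact (u - (l - \<kappa> - p)))"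
        unfolding cc_def by (simp add: field_simps)
      finally show ?thesis using True C h1 h2 h3 h4 h5 by (simp add: Let_def)
    qed
  qed
  have S: "(\<Sum>\<kappa>\<in>{0..nat (tj1 + tj2 + tJ)}.
          let tk = 2 * int \<kappa> in
          if 0 \<le> tj1 + tj2 - tJ - tk \<and> 0 \<le> tj1 - tm1 - tk \<and> 0 \<le> tj2 + tm2 - tk \<and>
             0 \<le> tJ - tj2 + tm1 + tk \<and> 0 \<le> tJ - tj1 - tm2 + tk
          then (-1) ^ \<kappa> / (fact \<kappa> * hfact (tj1 + tj2 - tJ - tk) * hfact (tj1 - tm1 - tk) *
                 hfact (tj2 + tm2 - tk) * hfact (tJ - tj2 + tm1 + tk) * hfact (tJ - tj1 - tm2 + tk))
          else 0) = (\<Sum>\<kappa>\<in>{m..l-p}. Y \<kappa>)"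
  proof -
    have sub: "{m..l-p} \<subseteq> {0..nat (tj1 + tj2 + tJ)}" using t by auto
    have "(\<Sum>\<kappa>\<in>{0..nat (tj1 + tj2 + tJ)}. (if \<kappa> \<in> {m..l-p} then Y \<kappa> else 0)) = (\<Sum>\<kappa>\<in>{m..l-p}. Y \<kappa>)"
    proof -
      have "(\<Sum>\<kappa>\<in>{0..nat (tj1 + tj2 + tJ)}. (if \<kappa> \<in> {m..l-p} then Y \<kappa> else 0)) = sum Y ({0..nat (tj1 + tj2 + tJ)} \<inter> {m..l-p})"
        by (rule sum.inter_restrict[symmetric]) simp
      also have "{0..nat (tj1 + tj2 + tJ)} \<inter> {m..l-p} = {m..l-p}" using sub by auto
      finally show ?thesis .
    qed
    then show ?thesis using trm by simp
  qed
  show ?thesis unfolding cg_def if_P[OF cond] A B S Y_def v_def ..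
qed

definition Tr :: "nat \<Rightarrow> nat \<Rightarrow> int \<Rightarrow> nat \<Rightarrow> nat \<Rightarrow> real" where
  "Tr n k q b a = (if int b = int a - q then
       sqrt ((2 * real k + 1) / (real n + 1)) *
         cg (2 * int k) (2 * q) (int n) (int n - 2 * int a) (int n) (int n - 2 * int a + 2 * q)
     else 0)"

lemma sph_Tr: "a \<le> n \<Longrightarrow> b \<le> n \<Longrightarrow> sph_tensor n k q $$ (b,a) = complex_of_real (Tr n k q b a)"
  unfolding sph_tensor_def Tr_def by simp

definition Pk :: "nat \<Rightarrow> nat \<Rightarrow> nat \<Rightarrow> nat \<Rightarrow> real poly" where
  "Pk n l p m = (\<Sum>\<kappa>\<in>{m..l-p}. Polynomial.smult (cc l p m \<kappa>) (ffp (l - \<kappa> - p) * ffq (n - p - m) (\<kappa> - m)))"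

definition Kk :: "nat \<Rightarrow> nat \<Rightarrow> nat \<Rightarrow> nat \<Rightarrow> real" where
  "Kk n l p m = sqrt ((2 * real l + 1) / (real n + 1)) * sqrt (P1 n l) * sqrt (fact (l + m - p) * fact (l + p - m))"

definition RR :: "nat \<Rightarrow> nat \<Rightarrow> nat \<Rightarrow> real" where
  "RR n a b = sqrt (fact (n - b) * fact b * fact a * fact (n - a))"

lemma Kk_pos: "l \<le> n \<Longrightarrow> Kk n l p m > 0"
  unfolding Kk_def using P1_pos by (simp add: add_pos_pos)

lemma poly_Pk: "u + p + m \<le> n \<Longrightarrow> poly (Pk n l p m) (real u) =
   (\<Sum>\<kappa>\<in>{m..l-p}. cc l p m \<kappa> * (ff (real u) (l - \<kappa> - p) * ff (real (n - u - p - m)) (\<kappa> - m)))"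
proof -
  assume a: "u + p + m \<le> n"
  have e: "real (n - (p + m)) - real u = real (n - (u + p + m))" using a by simp
  show ?thesis unfolding Pk_def by (simp add: poly_sum poly_ffp poly_ffq e)
qed

lemma Tr_diag:
  assumes pm: "p = 0 \<or> m = 0" "p + m \<le> l" "l \<le> n" "u + p + m \<le> n"
  shows "Tr n l (int p - int m) (u + m) (u + p) =
    Kk n l p m * RR n (u + p) (u + m) / (fact u * fact (n - u - p - m)) * poly (Pk n l p m) (real u)"
proof -
  have cgv: "cg (2 * int l) (2 * (int p - int m)) (int n) (int n - 2 * int (u + p)) (int n) (int n - 2 * int (u + p) + 2 * (int p - int m)) =
    sqrt (P1 n l) * sqrt (fact (n - (u + m)) * fact (u + m) * fact (l + m - p) * fact (l + p - m) * fact (u + p) * fact (n - (u + p))) *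
    (\<Sum>\<kappa>\<in>{m..l-p}. cc l p m \<kappa> * (ff (real u) (l - \<kappa> - p) * ff (real (n - u - p - m)) (\<kappa> - m)) / (fact u * fact (n - u - p - m)))"
    by (rule cg_alt[OF pm]) simp_all
  have sq: "sqrt (fact (n - (u + m)) * fact (u + m) * fact (l + m - p) * fact (l + p - m) * fact (u + p) * fact (n - (u + p)) :: real) =
      sqrt (fact (l + m - p) * fact (l + p - m)) * RR n (u + p) (u + m)"
    unfolding RR_def by (simp add: real_sqrt_mult[symmetric] mult_ac)
  have "Tr n l (int p - int m) (u + m) (u + p) = sqrt ((2 * real l + 1) / (real n + 1)) *
    cg (2 * int l) (2 * (int p - int m)) (int n) (int n - 2 * int (u + p)) (int n) (int n - 2 * int (u + p) + 2 * (int p - int m))"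
    unfolding Tr_def by simp
  also have "\<dots> = Kk n l p m * RR n (u + p) (u + m) / (fact u * fact (n - u - p - m)) * poly (Pk n l p m) (real u)"
    unfolding cgv sq poly_Pk[OF pm(4)] Kk_def by (simp add: sum_divide_distrib[symmetric] field_simps)
  finally show ?thesis .
qed

lemma Pk_degree: "degree (Pk n l p m) \<le> l - p - m"
  unfolding Pk_def
proof (rule degree_sum_le)
  fix \<kappa> assume k: "\<kappa> \<in> {m..l-p}"
  have "degree (ffp (l - \<kappa> - p) * ffq (n - p - m) (\<kappa> - m)) \<le> (l - \<kappa> - p) + (\<kappa> - m)"
    using degree_mult_le[of "ffp (l - \<kappa> - p)" "ffq (n - p - m) (\<kappa> - m)"] degree_ffp degree_ffq by simp
  also have "\<dots> = l - p - m" using k by auto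
  finally show "degree (Polynomial.smult (cc l p m \<kappa>) (ffp (l - \<kappa> - p) * ffq (n - p - m) (\<kappa> - m))) \<le> l - p - m"
    by (meson degree_smult_le order_trans)
qed simp

lemma Pk_coeff: assumes "p + m \<le> l" shows "coeff (Pk n l p m) (l - p - m) \<noteq> 0"
proof -
  have "coeff (Pk n l p m) (l - p - m) = (\<Sum>\<kappa>\<in>{m..l-p}. cc l p m \<kappa> * (-1)^(\<kappa> - m))"
    unfolding Pk_def coeff_sum
  proof (intro sum.cong refl)
    fix \<kappa> assume k: "\<kappa> \<in> {m..l-p}"
    have e: "l - p - m = degree (ffp (l - \<kappa> - p)) + degree (ffq (n - p - m) (\<kappa> - m))"
      using k by (auto simp: degree_ffp degree_ffq)
    show "coeff (Polynomial.smult (cc l p m \<kappa>) (ffp (l - \<kappa> - p) * ffq (n - p - m) (\<kappa> - m))) (l - p - m) = cc l p m \<kappa> * (-1)^(\<kappa> - m)"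
      unfolding coeff_smult e coeff_mult_degree_sum by (simp add: degree_ffp degree_ffq lead_ffp lead_ffq)
  qed
  also have "\<dots> = (\<Sum>\<kappa>\<in>{m..l-p}. (-1)^m * (1 / (fact \<kappa> * fact (l - \<kappa>) * fact (l + m - p - \<kappa>) * fact (p + \<kappa> - m))))"
  proof (intro sum.cong refl)
    fix \<kappa> assume k: "\<kappa> \<in> {m..l-p}"
    then have "\<kappa> = m + (\<kappa> - m)" by auto
    then have "(-1::real)^\<kappa> * (-1)^(\<kappa> - m) = (-1)^m * ((-1)^(\<kappa> - m) * (-1)^(\<kappa> - m))"
      by (metis mult.assoc power_add)
    also have "\<dots> = (-1)^m" by (simp add: power_mult_distrib[symmetric])
    finally have "(-1::real)^\<kappa> * (-1)^(\<kappa> - m) = (-1)^m" .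
    then show "cc l p m \<kappa> * (-1)^(\<kappa> - m) = (-1)^m * (1 / (fact \<kappa> * fact (l - \<kappa>) * fact (l + m - p - \<kappa>) * fact (p + \<kappa> - m)))"
      unfolding cc_def by (simp add: field_simps)
  qed
  also have "\<dots> = (-1)^m * (\<Sum>\<kappa>\<in>{m..l-p}. 1 / (fact \<kappa> * fact (l - \<kappa>) * fact (l + m - p - \<kappa>) * fact (p + \<kappa> - m)))"
    by (simp add: sum_distrib_left)
  finally have eq: "coeff (Pk n l p m) (l - p - m) = (-1)^m * (\<Sum>\<kappa>\<in>{m..l-p}. 1 / (fact \<kappa> * fact (l - \<kappa>) * fact (l + m - p - \<kappa>) * fact (p + \<kappa> - m)))" .
  have "(\<Sum>\<kappa>\<in>{m..l-p}. 1 / (fact \<kappa> * fact (l - \<kappa>) * fact (l + m - p - \<kappa>) * fact (p + \<kappa> - m) :: real)) > 0"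
    by (rule sum_pos) (use assms in auto)
  then show ?thesis unfolding eq by simp
qed

definition Ew :: "nat \<Rightarrow> nat \<Rightarrow> nat \<Rightarrow> nat \<Rightarrow> nat \<Rightarrow> nat \<Rightarrow> real" where
  "Ew n w s t b a = (if b + t = a + s \<and> t \<le> a then real ((n - w) choose (a - t)) / sqrt (real (n choose b) * real (n choose a)) else 0)"

lemma inv_sqrt_binom: assumes "a \<le> n" "b \<le> n"
  shows "1 / sqrt (real (n choose b) * real (n choose a)) = RR n a b / fact n"
proof -
  define X :: real where "X = fact (n - b) * fact b * fact a * fact (n - a)"
  have X0: "X > 0" unfolding X_def by simp
  have "real (n choose b) * real (n choose a) = fact n * fact n / X"
    unfolding X_def using assms by (simp add: binomial_fact field_simps)
  then have "sqrt (real (n choose b) * real (n choose a)) = fact n / sqrt X"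
    using X0 by (simp add: real_sqrt_divide real_sqrt_mult)
  then show ?thesis unfolding RR_def X_def[symmetric] using X0 by simp
qed

lemma Ew_diag:
  assumes pm: "p = t - s" "m = s - t" and st: "s \<le> w" "t \<le> w" "w \<le> n" and u: "u + p + m \<le> n"
  shows "Ew n w s t (u + m) (u + p) = RR n (u + p) (u + m) / fact n * fact (n - w) *
      poly (ffp (t - p) * ffq (n - p - m) (w - t - m)) (real u) / (fact u * fact (n - u - p - m))"
proof -
  define a where "a = u + p"
  define v where "v = n - u - p - m"
  have diag: "u + m + t = a + s" unfolding a_def using pm by auto
  have ev: "real (n - (p + m)) - real u = real v" unfolding v_def using u by simp
  have f1: "ff (real u) (t - p) / fact u = (if t \<le> a then 1 / fact (a - t) else 0)"
    unfolding ff_nat_div a_def using pm by auto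
  have f2: "t \<le> a \<Longrightarrow> ff (real v) (w - t - m) / fact v = (if a - t \<le> n - w then 1 / fact (n - w - (a - t)) else 0)"
  proof -
    assume ta: "t \<le> a"
    have "(w - t - m \<le> v) = (a - t \<le> n - w)" unfolding v_def a_def using pm st u ta[unfolded a_def] by arith
    moreover have "v - (w - t - m) = n - w - (a - t)" unfolding v_def a_def using pm st u ta[unfolded a_def] by arith
    ultimately show ?thesis unfolding ff_nat_div by simp
  qed
  have "Ew n w s t (u + m) (u + p) = (if t \<le> a then real ((n - w) choose (a - t)) else 0) * (RR n a (u + m) / fact n)"
    unfolding Ew_def a_def[symmetric] using diag inv_sqrt_binom[of a n "u + m"] u unfolding a_def
    by (auto simp: divide_inverse)
  also have "\<dots> = RR n a (u + m) / fact n * fact (n - w) * ((ff (real u) (t - p) / fact u) * (ff (real v) (w - t - m) / fact v))"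
  proof (cases "t \<le> a")
    case True
    show ?thesis
    proof (cases "a - t \<le> n - w")
      case True2: True
      have Cv: "real ((n - w) choose (a - t)) = fact (n - w) / (fact (a - t) * fact (n - w - (a - t)))"
        using True2 by (simp add: binomial_fact)
      have e1: "ff (real u) (t - p) / fact u = 1 / fact (a - t)" using f1 True by simp
      have e2: "ff (real v) (w - t - m) / fact v = 1 / fact (n - w - (a - t))" using f2[OF True] True2 by simp
      show ?thesis unfolding e1 e2 using True by (simp add: Cv mult_ac)
    next
      case False
      then show ?thesis using True f1 f2[OF True] by (simp add: binomial_eq_0)
    qed
  next
    case False
    then show ?thesis using f1 by simp
  qed
  also have "\<dots> = RR n (u + p) (u + m) / fact n * fact (n - w) *
      poly (ffp (t - p) * ffq (n - p - m) (w - t - m)) (real u) / (fact u * fact (n - u - p - m))"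
    unfolding a_def v_def[symmetric] by (simp add: poly_ffp poly_ffq ev)
  finally show ?thesis .
qed

lemma KEY:
  assumes st: "s \<le> w" "t \<le> w" "w \<le> n"
  shows "\<exists>\<alpha>. \<forall>b a. b \<le> n \<longrightarrow> a \<le> n \<longrightarrow>
     Ew n w s t b a = (\<Sum>l\<in>{(t-s)+(s-t)..w}. \<alpha> l * Tr n l (int t - int s) b a)"
proof -
  define p where "p = t - s"
  define m where "m = s - t"
  have pm0: "p = 0 \<or> m = 0" unfolding p_def m_def by auto
  have q: "int t - int s = int p - int m" unfolding p_def m_def by auto
  have pmw: "p + m \<le> w" unfolding p_def m_def using st by auto
  define D where "D = w - p - m"
  define Pf where "Pf = (\<lambda>i. Pk n (p + m + i) p m)"
  have hyp: "\<forall>i\<le>D. degree (Pf i) \<le> i \<and> coeff (Pf i) i \<noteq> 0"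
  proof (intro allI impI conjI)
    fix i assume "i \<le> D"
    show "degree (Pf i) \<le> i" unfolding Pf_def using Pk_degree[of n "p + m + i" p m] by simp
    show "coeff (Pf i) i \<noteq> 0" unfolding Pf_def using Pk_coeff[of p m "p + m + i" n] by simp
  qed
  define Tp where "Tp = ffp (t - p) * ffq (n - p - m) (w - t - m)"
  have dTp: "degree Tp \<le> D"
  proof -
    have "degree Tp \<le> (t - p) + (w - t - m)"
      unfolding Tp_def using degree_mult_le[of "ffp (t - p)" "ffq (n - p - m) (w - t - m)"] by (simp add: degree_ffp degree_ffq)
    also have "\<dots> = D" unfolding D_def p_def m_def using st by auto
    finally show ?thesis .
  qed
  obtain \<beta> where beta: "Tp = (\<Sum>i\<le>D. Polynomial.smult (\<beta> i) (Pf i))"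
    using span_poly[OF hyp dTp] by blast
  define \<alpha> where "\<alpha> = (\<lambda>l. \<beta> (l - p - m) * fact (n - w) / (fact n * Kk n l p m))"
  show ?thesis
  proof (intro exI[of _ \<alpha>] allI impI)
    fix b a assume b: "b \<le> n" and a: "a \<le> n"
    show "Ew n w s t b a = (\<Sum>l\<in>{(t-s)+(s-t)..w}. \<alpha> l * Tr n l (int t - int s) b a)"
    proof (cases "b + t = a + s")
      case False
      then have "\<And>l. Tr n l (int t - int s) b a = 0" unfolding Tr_def by auto
      moreover have "Ew n w s t b a = 0" unfolding Ew_def using False by simp
      ultimately show ?thesis by simp
    next
      case True
      define u where "u = a - p"
      have au: "a = u + p" and bu: "b = u + m" unfolding u_def p_def m_def using True by auto
      have upm: "u + p + m \<le> n" using a b au bu pm0 by auto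
      define v where "v = n - u - p - m"
      define C where "C = RR n (u + p) (u + m) / (fact u * fact v) * (fact (n - w) / fact n)"
      have "Ew n w s t b a = C * poly Tp (real u)"
        unfolding au bu Ew_diag[OF p_def m_def st upm] C_def Tp_def v_def by simp
      also have "\<dots> = C * (\<Sum>i\<le>D. \<beta> i * poly (Pf i) (real u))"
        unfolding beta by (simp add: poly_sum)
      also have "\<dots> = (\<Sum>i\<le>D. C * (\<beta> i * poly (Pk n (p + m + i) p m) (real u)))"
        unfolding Pf_def by (simp add: sum_distrib_left)
      also have "\<dots> = (\<Sum>l\<in>{p+m..w}. C * (\<beta> (l - p - m) * poly (Pk n l p m) (real u)))"
        by (rule sum.reindex_bij_witness[where i = "\<lambda>l. l - p - m" and j = "\<lambda>i. p + m + i"])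
           (use pmw in \<open>auto simp: D_def\<close>)
      also have "\<dots> = (\<Sum>l\<in>{p+m..w}. \<alpha> l * Tr n l (int t - int s) b a)"
      proof (intro sum.cong refl)
        fix l assume l: "l \<in> {p+m..w}"
        then have ln: "l \<le> n" "p + m \<le> l" using st by auto
        have Kp: "Kk n l p m > 0" using Kk_pos[OF ln(1)] .
        have "Tr n l (int t - int s) b a = Kk n l p m * RR n (u + p) (u + m) / (fact u * fact v) * poly (Pk n l p m) (real u)"
          unfolding q au bu v_def using Tr_diag[OF pm0 ln(2) ln(1) upm] by simp
        then show "C * (\<beta> (l - p - m) * poly (Pk n l p m) (real u)) = \<alpha> l * Tr n l (int t - int s) b a"
          unfolding \<alpha>_def C_def using Kp by (simp add: field_simps)
      qed
      finally show ?thesis unfolding p_def m_def .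
    qed
  qed
qed

lemma cnj_if: "cnj (if P then x else y) = (if P then cnj x else cnj y)"
  by simp

lemma prod_split_S:
  fixes A :: "nat \<Rightarrow> complex mat"
  assumes S: "S \<subseteq> {..<n}" and A1: "\<forall>i<n. i \<notin> S \<longrightarrow> A i = 1\<^sub>m 2"
    and XS: "XS \<subseteq> S" and YS: "YS \<subseteq> S" and Z: "Z \<subseteq> {..<n} - S" and Z': "Z' \<subseteq> {..<n} - S"
  shows "(\<Prod>i<n. A i $$ (chi (XS \<union> Z) i, chi (YS \<union> Z') i)) =
         (\<Prod>i\<in>S. A i $$ (chi XS i, chi YS i)) * (if Z = Z' then 1 else 0)"
proof -
  have "(\<Prod>i<n. A i $$ (chi (XS \<union> Z) i, chi (YS \<union> Z') i)) =
     (\<Prod>i\<in>S. A i $$ (chi (XS \<union> Z) i, chi (YS \<union> Z') i)) * (\<Prod>i\<in>{..<n} - S. A i $$ (chi (XS \<union> Z) i, chi (YS \<union> Z') i))"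
    using prod.subset_diff[OF S] by (simp add: mult.commute)
  also have "(\<Prod>i\<in>S. A i $$ (chi (XS \<union> Z) i, chi (YS \<union> Z') i)) = (\<Prod>i\<in>S. A i $$ (chi XS i, chi YS i))"
    using Z Z' by (intro prod.cong refl) (auto simp: chi_def)
  also have "(\<Prod>i\<in>{..<n} - S. A i $$ (chi (XS \<union> Z) i, chi (YS \<union> Z') i)) = (\<Prod>i\<in>{..<n} - S. (1\<^sub>m 2 :: complex mat) $$ (chi Z i, chi Z' i))"
    using XS YS A1 by (intro prod.cong refl) (auto simp: chi_def)
  also have "\<dots> = (if Z = Z' then 1 else 0)"
  proof (cases "Z = Z'")
    case True
    then show ?thesis by (auto simp: chi_def intro!: prod.neutral)
  next
    case False
    then obtain i where i: "i \<in> {..<n} - S" "(i \<in> Z) \<noteq> (i \<in> Z')" using Z Z' by blast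
    have "(1\<^sub>m 2 :: complex mat) $$ (chi Z i, chi Z' i) = 0" using i(2) by (auto simp: chi_def)
    then have "(\<Prod>i\<in>{..<n} - S. (1\<^sub>m 2 :: complex mat) $$ (chi Z i, chi Z' i)) = 0"
      using i(1) by (intro prod_zero) auto
    then show ?thesis using False by simp
  qed
  finally show ?thesis .
qed

lemma M_decomp:
  fixes A :: "nat \<Rightarrow> complex mat"
  assumes S: "S \<subseteq> {..<n}" and A1: "\<forall>i<n. i \<notin> S \<longrightarrow> A i = 1\<^sub>m 2" and b: "b \<le> n" and a: "a \<le> n"
  shows "(cadj (dicke_map n) * tensor_ops n A * dicke_map n) $$ (b,a) =
    (\<Sum>XS\<in>Pow S. \<Sum>YS\<in>Pow S. (\<Prod>i\<in>S. A i $$ (chi XS i, chi YS i)) *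
        complex_of_real (Ew n (card S) (card XS) (card YS) b a))"
proof -
  let ?D = "dicke_map n" and ?E = "tensor_ops n A"
  define w where "w = card S"
  define cb where "cb = complex_of_real (1 / sqrt (real (n choose b)))"
  define ca where "ca = complex_of_real (1 / sqrt (real (n choose a)))"
  define e where "e = (\<lambda>XS YS. \<Prod>i\<in>S. A i $$ (chi XS i, chi YS i))"
  have cD: "cadj ?D \<in> carrier_mat (n+1) (2^n)" using dicke_carrier cadj_carrier_mat by blast
  have cDE: "cadj ?D * ?E \<in> carrier_mat (n+1) (2^n)" using cD tensor_ops_carrier by auto
  have fS: "finite S" using S finite_subset by blast
  have cnS: "card ({..<n} - S) = n - w" unfolding w_def using S fS by (simp add: card_Diff_subset)
  have "(cadj ?D * ?E * ?D) $$ (b,a) = (\<Sum>y<2^n. (cadj ?D * ?E) $$ (b,y) * ?D $$ (y,a))"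
    using mult_entry[OF cDE dicke_carrier] a b by simp
  also have "\<dots> = (\<Sum>y<2^n. (\<Sum>x<2^n. cadj ?D $$ (b,x) * ?E $$ (x,y)) * ?D $$ (y,a))"
    using mult_entry[OF cD tensor_ops_carrier] b by simp
  also have "\<dots> = (\<Sum>y<2^n. (\<lambda>Y. \<Sum>x<2^n. (\<lambda>X. (if card X = b then cb else 0) * (\<Prod>i<n. A i $$ (chi X i, chi Y i)) * (if card Y = a then ca else 0)) (bits n x)) (bits n y))"
  proof (intro sum.cong refl)
    fix y :: nat assume y: "y \<in> {..<2^n}"
    have h1: "\<And>x. x \<in> {..<2^n} \<Longrightarrow> cadj ?D $$ (b,x) = (if card (bits n x) = b then cb else 0)"
      using b unfolding cb_def by (auto simp: dicke_entry)
    have h2: "?D $$ (y,a) = (if card (bits n y) = a then ca else 0)"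
      using a y unfolding ca_def by (auto simp: dicke_entry)
    have h3: "\<And>x. x \<in> {..<2^n} \<Longrightarrow> ?E $$ (x,y) = (\<Prod>i<n. A i $$ (chi (bits n x) i, chi (bits n y) i))"
      using y by (auto simp: tensor_ops_entry)
    show "(\<Sum>x<2^n. cadj ?D $$ (b,x) * ?E $$ (x,y)) * ?D $$ (y,a) =
      (\<lambda>Y. \<Sum>x<2^n. (\<lambda>X. (if card X = b then cb else 0) * (\<Prod>i<n. A i $$ (chi X i, chi Y i)) * (if card Y = a then ca else 0)) (bits n x)) (bits n y)"
      unfolding h2 sum_distrib_right by (intro sum.cong refl) (simp add: h1 h3)
  qed
  also have "\<dots> = (\<Sum>Y\<in>Pow {..<n}. \<Sum>X\<in>Pow {..<n}. (if card X = b then cb else 0) * (\<Prod>i<n. A i $$ (chi X i, chi Y i)) * (if card Y = a then ca else 0))"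
  proof -
    define G where "G = (\<lambda>X Y. (if card X = b then cb else 0) * (\<Prod>i<n. A i $$ (chi X i, chi Y i)) * (if card Y = a then ca else 0))"
    have "(\<Sum>y<2^n. \<Sum>x<2^n. G (bits n x) (bits n y)) = (\<Sum>y<2^n. \<Sum>X\<in>Pow {..<n}. G X (bits n y))"
    proof (intro sum.cong refl)
      fix y show "(\<Sum>x<2^n. G (bits n x) (bits n y)) = (\<Sum>X\<in>Pow {..<n}. G X (bits n y))"
        using sum_bits[where n=n and f="\<lambda>X. G X (bits n y)"] by simp
    qed
    also have "\<dots> = (\<Sum>Y\<in>Pow {..<n}. \<Sum>X\<in>Pow {..<n}. G X Y)"
      using sum_bits[where n=n and f="\<lambda>Y. \<Sum>X\<in>Pow {..<n}. G X Y"] by simp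
    finally show ?thesis unfolding G_def by simp
  qed
  also have "\<dots> = (\<Sum>YS\<in>Pow S. \<Sum>Z'\<in>Pow ({..<n} - S). \<Sum>XS\<in>Pow S. \<Sum>Z\<in>Pow ({..<n} - S).
      (if card XS + card Z = b then cb else 0) * (e XS YS * (if Z = Z' then 1 else 0)) * (if card YS + card Z' = a then ca else 0))"
  proof -
    have "\<And>Y. Y \<in> Pow {..<n} \<Longrightarrow> (\<Sum>X\<in>Pow {..<n}. (if card X = b then cb else 0) * (\<Prod>i<n. A i $$ (chi X i, chi Y i)) * (if card Y = a then ca else 0))
       = (\<Sum>XS\<in>Pow S. \<Sum>Z\<in>Pow ({..<n} - S). (if card (XS \<union> Z) = b then cb else 0) * (\<Prod>i<n. A i $$ (chi (XS \<union> Z) i, chi Y i)) * (if card Y = a then ca else 0))"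
      by (rule sum_Pow_split[OF _ S]) simp
    then have "(\<Sum>Y\<in>Pow {..<n}. \<Sum>X\<in>Pow {..<n}. (if card X = b then cb else 0) * (\<Prod>i<n. A i $$ (chi X i, chi Y i)) * (if card Y = a then ca else 0))
      = (\<Sum>Y\<in>Pow {..<n}. \<Sum>XS\<in>Pow S. \<Sum>Z\<in>Pow ({..<n} - S). (if card (XS \<union> Z) = b then cb else 0) * (\<Prod>i<n. A i $$ (chi (XS \<union> Z) i, chi Y i)) * (if card Y = a then ca else 0))"
      by (rule sum.cong[OF refl])
    also have "\<dots> = (\<Sum>YS\<in>Pow S. \<Sum>Z'\<in>Pow ({..<n} - S). \<Sum>XS\<in>Pow S. \<Sum>Z\<in>Pow ({..<n} - S). (if card (XS \<union> Z) = b then cb else 0) * (\<Prod>i<n. A i $$ (chi (XS \<union> Z) i, chi (YS \<union> Z') i)) * (if card (YS \<union> Z') = a then ca else 0))"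
      by (rule sum_Pow_split[OF _ S]) simp
    also have "\<dots> = (\<Sum>YS\<in>Pow S. \<Sum>Z'\<in>Pow ({..<n} - S). \<Sum>XS\<in>Pow S. \<Sum>Z\<in>Pow ({..<n} - S).
      (if card XS + card Z = b then cb else 0) * (e XS YS * (if Z = Z' then 1 else 0)) * (if card YS + card Z' = a then ca else 0))"
    proof (intro sum.cong refl)
      fix YS Z' XS Z assume h: "YS \<in> Pow S" "Z' \<in> Pow ({..<n} - S)" "XS \<in> Pow S" "Z \<in> Pow ({..<n} - S)"
      have f: "finite XS" "finite Z" "finite YS" "finite Z'" using h fS by (auto intro: finite_subset)
      have c1: "card (XS \<union> Z) = card XS + card Z" using h f by (intro card_Un_disjoint) auto
      have c2: "card (YS \<union> Z') = card YS + card Z'" using h f by (intro card_Un_disjoint) auto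
      show "(if card (XS \<union> Z) = b then cb else 0) * (\<Prod>i<n. A i $$ (chi (XS \<union> Z) i, chi (YS \<union> Z') i)) * (if card (YS \<union> Z') = a then ca else 0) =
        (if card XS + card Z = b then cb else 0) * (e XS YS * (if Z = Z' then 1 else 0)) * (if card YS + card Z' = a then ca else 0)"
        unfolding c1 c2 e_def using prod_split_S[OF S A1] h by simp
    qed
    finally show ?thesis .
  qed
  also have "\<dots> = (\<Sum>YS\<in>Pow S. \<Sum>Z'\<in>Pow ({..<n} - S). \<Sum>XS\<in>Pow S.
      (if card XS + card Z' = b then cb else 0) * e XS YS * (if card YS + card Z' = a then ca else 0))"
  proof (intro sum.cong refl)
    fix YS Z' XS assume h: "Z' \<in> Pow ({..<n} - S)"
    have "(\<Sum>Z\<in>Pow ({..<n} - S). (if card XS + card Z = b then cb else 0) * (e XS YS * (if Z = Z' then 1 else 0)) * (if card YS + card Z' = a then ca else 0))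
       = (\<Sum>Z\<in>Pow ({..<n} - S). if Z = Z' then (if card XS + card Z = b then cb else 0) * e XS YS * (if card YS + card Z' = a then ca else 0) else 0)"
      by (intro sum.cong refl) auto
    also have "\<dots> = (if card XS + card Z' = b then cb else 0) * e XS YS * (if card YS + card Z' = a then ca else 0)"
      using h by (simp add: sum.delta')
    finally show "(\<Sum>Z\<in>Pow ({..<n} - S). (if card XS + card Z = b then cb else 0) * (e XS YS * (if Z = Z' then 1 else 0)) * (if card YS + card Z' = a then ca else 0))
       = (if card XS + card Z' = b then cb else 0) * e XS YS * (if card YS + card Z' = a then ca else 0)" .
  qed
  also have "\<dots> = (\<Sum>YS\<in>Pow S. \<Sum>XS\<in>Pow S. \<Sum>Z'\<in>Pow ({..<n} - S).
      (if card XS + card Z' = b then cb else 0) * e XS YS * (if card YS + card Z' = a then ca else 0))"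
    by (rule sum.cong[OF refl], rule sum.swap)
  also have "\<dots> = (\<Sum>YS\<in>Pow S. \<Sum>XS\<in>Pow S. e XS YS * complex_of_real (Ew n w (card XS) (card YS) b a))"
  proof (intro sum.cong refl)
    fix YS XS :: "nat set"
    define s where "s = card XS"
    define t where "t = card YS"
    have "(\<Sum>Z'\<in>Pow ({..<n} - S). (if card XS + card Z' = b then cb else 0) * e XS YS * (if card YS + card Z' = a then ca else 0))
      = (\<Sum>Z'\<in>Pow ({..<n} - S). (\<lambda>r. if s + r = b \<and> t + r = a then cb * ca * e XS YS else 0) (card Z'))"
      unfolding s_def t_def by (intro sum.cong refl) auto
    also have "\<dots> = (\<Sum>r\<le>n - w. of_nat ((n - w) choose r) * (if s + r = b \<and> t + r = a then cb * ca * e XS YS else 0))"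
      using sum_Pow_card[of "{..<n} - S" "\<lambda>r. if s + r = b \<and> t + r = a then cb * ca * e XS YS else 0"] cnS by simp
    also have "\<dots> = (\<Sum>r\<le>n - w. if r = a - t \<and> t \<le> a \<and> b + t = a + s then of_nat ((n - w) choose (a - t)) * (cb * ca * e XS YS) else 0)"
    proof (intro sum.cong refl)
      fix r
      have eqc: "(s + r = b \<and> t + r = a) = (r = a - t \<and> t \<le> a \<and> b + t = a + s)" by arith
      show "of_nat ((n - w) choose r) * (if s + r = b \<and> t + r = a then cb * ca * e XS YS else 0) =
        (if r = a - t \<and> t \<le> a \<and> b + t = a + s then of_nat ((n - w) choose (a - t)) * (cb * ca * e XS YS) else 0)"
        unfolding eqc by auto
    qed
    also have "\<dots> = (if t \<le> a \<and> b + t = a + s then of_nat ((n - w) choose (a - t)) * (cb * ca * e XS YS) else 0)"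
    proof (cases "t \<le> a \<and> b + t = a + s")
      case True
      show ?thesis
      proof (cases "a - t \<le> n - w")
        case True2: True
        then show ?thesis using True by (simp add: sum.delta')
      next
        case False
        then have "(n - w) choose (a - t) = 0" by simp
        then show ?thesis using True False by (simp add: sum.delta')
      qed
    next
      case False
      then show ?thesis by (auto intro!: sum.neutral)
    qed
    also have "\<dots> = e XS YS * complex_of_real (Ew n w s t b a)"
    proof -
      have "cb * ca = complex_of_real (1 / sqrt (real (n choose b) * real (n choose a)))"
        unfolding cb_def ca_def by (simp add: real_sqrt_mult)
      moreover have "(b + t = a + s \<and> t \<le> a) = (t \<le> a \<and> b + t = a + s)" by auto
      ultimately show ?thesis unfolding Ew_def
        by (cases "t \<le> a \<and> b + t = a + s") (auto simp add: divide_inverse mult_ac)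
    qed
    finally show "(\<Sum>Z'\<in>Pow ({..<n} - S). (if card XS + card Z' = b then cb else 0) * e XS YS * (if card YS + card Z' = a then ca else 0))
      = e XS YS * complex_of_real (Ew n w (card XS) (card YS) b a)" unfolding s_def t_def .
  qed
  also have "\<dots> = (\<Sum>XS\<in>Pow S. \<Sum>YS\<in>Pow S. e XS YS * complex_of_real (Ew n w (card XS) (card YS) b a))"
    by (rule sum.swap)
  finally show ?thesis unfolding e_def w_def .
qed

definition BF :: "nat \<Rightarrow> (nat \<Rightarrow> nat \<Rightarrow> complex) \<Rightarrow> complex vec \<Rightarrow> complex vec \<Rightarrow> complex" where
  "BF n f u v = (\<Sum>b<n+1. \<Sum>a<n+1. cnj (u $ b) * f b a * v $ a)"

definition PropF :: "nat \<Rightarrow> nat \<Rightarrow> complex mat \<Rightarrow> (nat \<Rightarrow> nat \<Rightarrow> complex) \<Rightarrow> bool" where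
  "PropF n K V f \<longleftrightarrow> (\<exists>c. \<forall>x\<in>carrier_vec K. \<forall>y\<in>carrier_vec K. BF n f (V *\<^sub>v x) (V *\<^sub>v y) = c * cinner x y)"

lemma BF_cinner: assumes "M \<in> carrier_mat (n+1) (n+1)" "u \<in> carrier_vec (n+1)" "v \<in> carrier_vec (n+1)"
  shows "cinner u (M *\<^sub>v v) = BF n (\<lambda>b a. M $$ (b,a)) u v"
proof -
  have "cinner u (M *\<^sub>v v) = (\<Sum>b<n+1. cnj (u $ b) * (M *\<^sub>v v) $ b)"
    unfolding cinner_def using assms by simp
  also have "\<dots> = (\<Sum>b<n+1. cnj (u $ b) * (\<Sum>a<n+1. M $$ (b,a) * v $ a))"
  proof (rule sum.cong[OF refl])
    fix b assume "b \<in> {..<n+1}"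
    then have b: "b < n+1" by simp
    show "cnj (u $ b) * (M *\<^sub>v v) $ b = cnj (u $ b) * (\<Sum>a<n+1. M $$ (b,a) * v $ a)"
      by (simp only: multv_entry[OF assms(1,3) b])
  qed
  also have "\<dots> = BF n (\<lambda>b a. M $$ (b,a)) u v"
    unfolding BF_def by (simp only: sum_distrib_left mult.assoc)
  finally show ?thesis .
qed

lemma PropF_cong: assumes "\<forall>b<n+1. \<forall>a<n+1. f b a = g b a" "PropF n K V f" shows "PropF n K V g"
proof -
  have "\<And>u v. BF n f u v = BF n g u v" unfolding BF_def using assms(1) by (intro sum.cong refl) auto
  then show ?thesis using assms(2) unfolding PropF_def by simp
qed

lemma PropF_sum: assumes "finite I" "\<forall>i\<in>I. PropF n K V (F i)"
  shows "PropF n K V (\<lambda>b a. \<Sum>i\<in>I. F i b a)"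
proof -
  from assms(2) have "\<forall>i\<in>I. \<exists>c. \<forall>x\<in>carrier_vec K. \<forall>y\<in>carrier_vec K. BF n (F i) (V *\<^sub>v x) (V *\<^sub>v y) = c * cinner x y"
    unfolding PropF_def by blast
  then obtain c where c: "\<forall>i\<in>I. \<forall>x\<in>carrier_vec K. \<forall>y\<in>carrier_vec K. BF n (F i) (V *\<^sub>v x) (V *\<^sub>v y) = c i * cinner x y"
    by metis
  have lin: "\<And>u v. BF n (\<lambda>b a. \<Sum>i\<in>I. F i b a) u v = (\<Sum>i\<in>I. BF n (F i) u v)"
  proof -
    fix u v
    have "BF n (\<lambda>b a. \<Sum>i\<in>I. F i b a) u v = (\<Sum>b<n+1. \<Sum>a<n+1. \<Sum>i\<in>I. cnj (u $ b) * F i b a * v $ a)"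
      unfolding BF_def by (simp add: sum_distrib_left sum_distrib_right)
    also have "\<dots> = (\<Sum>b<n+1. \<Sum>i\<in>I. \<Sum>a<n+1. cnj (u $ b) * F i b a * v $ a)"
      by (rule sum.cong[OF refl], rule sum.swap)
    also have "\<dots> = (\<Sum>i\<in>I. \<Sum>b<n+1. \<Sum>a<n+1. cnj (u $ b) * F i b a * v $ a)"
      by (rule sum.swap)
    finally show "BF n (\<lambda>b a. \<Sum>i\<in>I. F i b a) u v = (\<Sum>i\<in>I. BF n (F i) u v)" unfolding BF_def .
  qed
  show ?thesis unfolding PropF_def
  proof (intro exI[of _ "\<Sum>i\<in>I. c i"] ballI)
    fix x y :: "complex vec" assume "x \<in> carrier_vec K" "y \<in> carrier_vec K"
    then show "BF n (\<lambda>b a. \<Sum>i\<in>I. F i b a) (V *\<^sub>v x) (V *\<^sub>v y) = (\<Sum>i\<in>I. c i) * cinner x y"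
      unfolding lin using c by (simp add: sum_distrib_right)
  qed
qed

lemma PropF_scale: assumes "PropF n K V f" shows "PropF n K V (\<lambda>b a. z * f b a)"
proof -
  have lin: "\<And>u v. BF n (\<lambda>b a. z * f b a) u v = z * BF n f u v"
    unfolding BF_def sum_distrib_left by (intro sum.cong refl) (simp add: mult_ac)
  from assms obtain c where "\<forall>x\<in>carrier_vec K. \<forall>y\<in>carrier_vec K. BF n f (V *\<^sub>v x) (V *\<^sub>v y) = c * cinner x y"
    unfolding PropF_def by blast
  then show ?thesis unfolding PropF_def lin by (intro exI[of _ "z * c"]) simp
qed

lemma Prop_T:
  assumes V: "V \<in> carrier_mat (n+1) K" "cadj V * V = 1\<^sub>m K" and sc: "spin_code_distance n d (image_mat V)"
    and k: "k < d" "k \<le> n" "\<bar>q\<bar> \<le> int k"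
  shows "PropF n K V (\<lambda>b a. complex_of_real (Tr n k q b a))"
proof -
  let ?T = "sph_tensor n k q"
  obtain c where c: "\<forall>\<phi>\<in>image_mat V. \<forall>\<psi>\<in>image_mat V. cinner \<phi> (?T *\<^sub>v \<psi>) = c * cinner \<phi> \<psi>"
    using sc k unfolding spin_code_distance_def by blast
  have cT: "?T \<in> carrier_mat (n+1) (n+1)" unfolding sph_tensor_def by simp
  have "PropF n K V (\<lambda>b a. ?T $$ (b,a))" unfolding PropF_def
  proof (intro exI[of _ c] ballI)
    fix x y :: "complex vec" assume x: "x \<in> carrier_vec K" and y: "y \<in> carrier_vec K"
    have im: "V *\<^sub>v x \<in> image_mat V" "V *\<^sub>v y \<in> image_mat V" unfolding image_mat_def using V x y by auto
    have cv: "V *\<^sub>v x \<in> carrier_vec (n+1)" "V *\<^sub>v y \<in> carrier_vec (n+1)" using V x y by auto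
    have "BF n (\<lambda>b a. ?T $$ (b,a)) (V *\<^sub>v x) (V *\<^sub>v y) = cinner (V *\<^sub>v x) (?T *\<^sub>v (V *\<^sub>v y))"
      using BF_cinner[OF cT cv] by simp
    also have "\<dots> = c * cinner (V *\<^sub>v x) (V *\<^sub>v y)" using c im by blast
    also have "\<dots> = c * cinner x y" using cinner_iso[OF V x y] by simp
    finally show "BF n (\<lambda>b a. ?T $$ (b,a)) (V *\<^sub>v x) (V *\<^sub>v y) = c * cinner x y" .
  qed
  then show ?thesis by (rule PropF_cong[rotated]) (simp add: sph_Tr)
qed

lemma Prop_Ew:
  assumes V: "V \<in> carrier_mat (n+1) K" "cadj V * V = 1\<^sub>m K" and sc: "spin_code_distance n d (image_mat V)"
    and st: "s \<le> w" "t \<le> w" "w \<le> n" "w < d"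
  shows "PropF n K V (\<lambda>b a. complex_of_real (Ew n w s t b a))"
proof -
  obtain \<alpha> where al: "\<forall>b a. b \<le> n \<longrightarrow> a \<le> n \<longrightarrow>
     Ew n w s t b a = (\<Sum>l\<in>{(t-s)+(s-t)..w}. \<alpha> l * Tr n l (int t - int s) b a)"
    using KEY[OF st(1-3)] by blast
  have "PropF n K V (\<lambda>b a. \<Sum>l\<in>{(t-s)+(s-t)..w}. complex_of_real (\<alpha> l) * complex_of_real (Tr n l (int t - int s) b a))"
  proof (rule PropF_sum, simp, intro ballI)
    fix l assume l: "l \<in> {(t-s)+(s-t)..w}"
    have "\<bar>int t - int s\<bar> \<le> int l" using l by auto
    then show "PropF n K V (\<lambda>b a. complex_of_real (\<alpha> l) * complex_of_real (Tr n l (int t - int s) b a))"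
      using l st by (intro PropF_scale Prop_T[OF V sc]) auto
  qed
  then show ?thesis by (rule PropF_cong[rotated]) (simp add: al)
qed

lemma Prop_M:
  fixes A :: "nat \<Rightarrow> complex mat"
  assumes V: "V \<in> carrier_mat (n+1) K" "cadj V * V = 1\<^sub>m K" and sc: "spin_code_distance n d (image_mat V)"
    and S: "S \<subseteq> {..<n}" and A1: "\<forall>i<n. i \<notin> S \<longrightarrow> A i = 1\<^sub>m 2" and Sd: "card S < d"
  shows "PropF n K V (\<lambda>b a. (cadj (dicke_map n) * tensor_ops n A * dicke_map n) $$ (b,a))"
proof -
  have fS: "finite S" using S finite_subset by blast
  have wn: "card S \<le> n" using card_mono[OF _ S] by simp
  have "PropF n K V (\<lambda>b a. \<Sum>XS\<in>Pow S. \<Sum>YS\<in>Pow S. (\<Prod>i\<in>S. A i $$ (chi XS i, chi YS i)) *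
        complex_of_real (Ew n (card S) (card XS) (card YS) b a))"
  proof (rule PropF_sum, simp add: fS, intro ballI)
    fix XS assume XS: "XS \<in> Pow S"
    show "PropF n K V (\<lambda>b a. \<Sum>YS\<in>Pow S. (\<Prod>i\<in>S. A i $$ (chi XS i, chi YS i)) * complex_of_real (Ew n (card S) (card XS) (card YS) b a))"
    proof (rule PropF_sum, simp add: fS, intro ballI)
      fix YS assume YS: "YS \<in> Pow S"
      have "card XS \<le> card S" "card YS \<le> card S" using XS YS fS by (auto intro: card_mono)
      then show "PropF n K V (\<lambda>b a. (\<Prod>i\<in>S. A i $$ (chi XS i, chi YS i)) * complex_of_real (Ew n (card S) (card XS) (card YS) b a))"
        using wn Sd by (intro PropF_scale Prop_Ew[OF V sc]) auto
    qed
  qed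
  then show ?thesis by (rule PropF_cong[rotated]) (intro allI impI, rule M_decomp[OF S A1, symmetric], auto)
qed

lemma cadj_cadj: "cadj (cadj A) = A"
  by (rule eq_matI) auto

lemma cinner_adj2: assumes "A \<in> carrier_mat m n" "u \<in> carrier_vec n" "w \<in> carrier_vec m"
  shows "cinner (A *\<^sub>v u) w = cinner u (cadj A *\<^sub>v w)"
  using cinner_adj[OF cadj_carrier_mat[OF assms(1)] assms(2) assms(3)] by (simp add: cadj_cadj)

lemma pauli1_0: "pauli1 0 = 1\<^sub>m 2"
  unfolding pauli1_def by simp

lemma dist_part:
  assumes V: "V \<in> carrier_mat (n+1) K" "cadj V * V = 1\<^sub>m K" and sc: "spin_code_distance n d (image_mat V)"
  shows "qubit_code_distance n d (image_mat (dicke_map n * V))"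
  unfolding qubit_code_distance_def
proof (intro allI impI)
  fix p assume p: "(\<forall>i<n. p i < 4) \<and> pauli_weight n p < d"
  let ?D = "dicke_map n"
  define S where "S = {i. i < n \<and> p i \<noteq> 0}"
  define A where "A = (\<lambda>i. pauli1 (p i))"
  have S: "S \<subseteq> {..<n}" unfolding S_def by auto
  have A1: "\<forall>i<n. i \<notin> S \<longrightarrow> A i = 1\<^sub>m 2" unfolding S_def A_def by (auto simp: pauli1_0)
  have Sd: "card S < d" using p unfolding S_def pauli_weight_def by simp
  have E: "pauli_op n p = tensor_ops n A" unfolding pauli_op_def A_def ..
  obtain c where c: "\<forall>x\<in>carrier_vec K. \<forall>y\<in>carrier_vec K.
     BF n (\<lambda>b a. (cadj ?D * tensor_ops n A * ?D) $$ (b,a)) (V *\<^sub>v x) (V *\<^sub>v y) = c * cinner x y"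
    using Prop_M[OF V sc S A1 Sd] unfolding PropF_def by blast
  have cD: "cadj ?D \<in> carrier_mat (n+1) (2^n)" using dicke_carrier cadj_carrier_mat by blast
  have cE: "tensor_ops n A \<in> carrier_mat (2^n) (2^n)" by (rule tensor_ops_carrier)
  have cM: "cadj ?D * tensor_ops n A * ?D \<in> carrier_mat (n+1) (n+1)" using cD cE dicke_carrier by auto
  have W: "?D * V \<in> carrier_mat (2^n) K" using V dicke_carrier by auto
  show "\<exists>c. \<forall>\<phi>\<in>image_mat (?D * V). \<forall>\<psi>\<in>image_mat (?D * V). cinner \<phi> (pauli_op n p *\<^sub>v \<psi>) = c * cinner \<phi> \<psi>"
  proof (intro exI[of _ c] ballI)
    fix \<phi> \<psi> assume ph: "\<phi> \<in> image_mat (?D * V)" and ps: "\<psi> \<in> image_mat (?D * V)"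
    obtain x where x: "x \<in> carrier_vec K" "\<phi> = (?D * V) *\<^sub>v x" using ph W unfolding image_mat_def by auto
    obtain y where y: "y \<in> carrier_vec K" "\<psi> = (?D * V) *\<^sub>v y" using ps W unfolding image_mat_def by auto
    have vx: "V *\<^sub>v x \<in> carrier_vec (n+1)" "V *\<^sub>v y \<in> carrier_vec (n+1)" using V x y by auto
    have px: "\<phi> = ?D *\<^sub>v (V *\<^sub>v x)" "\<psi> = ?D *\<^sub>v (V *\<^sub>v y)"
      using x y assoc_mult_mat_vec[OF dicke_carrier V(1) x(1)] assoc_mult_mat_vec[OF dicke_carrier V(1) y(1)] by auto
    have dvy: "?D *\<^sub>v (V *\<^sub>v y) \<in> carrier_vec (2^n)" using mult_mat_vec_carrier[OF dicke_carrier vx(2)] .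
    have "cinner \<phi> (pauli_op n p *\<^sub>v \<psi>) = cinner (?D *\<^sub>v (V *\<^sub>v x)) (tensor_ops n A *\<^sub>v (?D *\<^sub>v (V *\<^sub>v y)))"
      unfolding px E ..
    also have "\<dots> = cinner (V *\<^sub>v x) (cadj ?D *\<^sub>v (tensor_ops n A *\<^sub>v (?D *\<^sub>v (V *\<^sub>v y))))"
      using cinner_adj2[OF dicke_carrier vx(1) mult_mat_vec_carrier[OF cE dvy]] .
    also have "cadj ?D *\<^sub>v (tensor_ops n A *\<^sub>v (?D *\<^sub>v (V *\<^sub>v y))) = (cadj ?D * tensor_ops n A * ?D) *\<^sub>v (V *\<^sub>v y)"
    proof -
      have cDE: "cadj ?D * tensor_ops n A \<in> carrier_mat (n+1) (2^n)" using cD cE by auto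
      show ?thesis using assoc_mult_mat_vec[OF cDE dicke_carrier vx(2)] assoc_mult_mat_vec[OF cD cE dvy] by simp
    qed
    also have "cinner (V *\<^sub>v x) ((cadj ?D * tensor_ops n A * ?D) *\<^sub>v (V *\<^sub>v y)) = c * cinner x y"
      using BF_cinner[OF cM vx] c x y by simp
    also have "cinner x y = cinner \<phi> \<psi>"
      unfolding px using cinner_iso[OF dicke_carrier dicke_iso vx] cinner_iso[OF V x(1) y(1)] by simp
    finally show "cinner \<phi> (pauli_op n p *\<^sub>v \<psi>) = c * cinner \<phi> \<psi>" .
  qed
qed

theorem theorem1:
  fixes G :: "complex mat set" and rho :: "complex mat \<Rightarrow> complex mat"
    and n K d :: nat and V :: "complex mat"
  assumes "finite_subgroup_SU2 G"
    and "irreducible_rep G K rho"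
    and "spin_code_with_isometry n K d V"
    and "\<forall>g\<in>G. wignerD n g * V = V * rho g"
  shows "perm_invariant_code n (image_mat (dicke_map n * V))
       \<and> code_dim (dicke_map n * V) = K
       \<and> qubit_code_distance n d (image_mat (dicke_map n * V))
       \<and> (\<forall>g\<in>G. tensor_pow n g * (dicke_map n * V) = (dicke_map n * V) * rho g)"
proof -
  have iso: "isometry_mat (n+1) K V" and sc: "spin_code_distance n d (image_mat V)"
    using assms(3) unfolding spin_code_with_isometry_def by auto
  have V: "V \<in> carrier_mat (n+1) K" "cadj V * V = 1\<^sub>m K" using iso unfolding isometry_mat_def by auto
  have tr: "\<forall>g\<in>G. tensor_pow n g * (dicke_map n * V) = (dicke_map n * V) * rho g"
  proof
    fix g assume g: "g \<in> G"
    have rg: "rho g \<in> carrier_mat K K" using assms(2) g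
      unfolding irreducible_rep_def unitary_rep_def unitary_mat_def by auto
    have cT: "tensor_pow n g \<in> carrier_mat (2^n) (2^n)" unfolding tensor_pow_def by (rule tensor_ops_carrier)
    have "tensor_pow n g * (dicke_map n * V) = (tensor_pow n g * dicke_map n) * V"
      using assoc_mult_mat[OF cT dicke_carrier V(1)] by simp
    also have "\<dots> = (dicke_map n * wignerD n g) * V" by (simp add: transversal)
    also have "\<dots> = dicke_map n * (wignerD n g * V)"
      using assoc_mult_mat[OF dicke_carrier wigner_carrier V(1)] by simp
    also have "\<dots> = dicke_map n * (V * rho g)" using assms(4) g by simp
    also have "\<dots> = (dicke_map n * V) * rho g"
      using assoc_mult_mat[OF dicke_carrier V(1) rg] by simp
    finally show "tensor_pow n g * (dicke_map n * V) = (dicke_map n * V) * rho g" .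
  qed
  show ?thesis using perm_inv_part[OF V(1)] code_dim_part[OF V] dist_part[OF V sc] tr by blast
qed

end
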